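(* Let $d\ge1$ and let $\mu$ be a stochastic measure on the Borel subsets of $[0,1]^d$ such that (A2) the random function $\mu(x)=\mu\bigl(\prod_{i=1}^d[0,x_i]\bigr)$, $x\in[0,1]^d$, has continuous paths, and (A3) if $d\ge2$, then $\sum_{k=1}^\infty k^{d-2}\,\omega(\mu,2^{-k})<\infty$ a.s. Let $f:[0,1]^d\to\mathbb{R}$ be $d$ times continuously differentiable on $[0,1]^d$, and let \[ \xi(y)=\int_{\prod_{s=1}^d[0,y_s]}f(x)\,d\mu(x),\qquad y=(y_1,\dots,y_d)\in[0,1]^d. \] Then the version of $\xi$ \[ \tilde\xi(y)=\int_{\prod_{s=1}^d[0,y_s]}S^{(d)}_1(f,x)\,d\mu(x)+\sum_{k=1}^\infty\int_{\prod_{s=1}^d[0,y_s]}\bigl(S^{(d)}_{2^k}(f,x)-S^{(d)}_{2^{k-1}}(f,x)\bigr)\,d\mu(x) \] has continuous paths on $[0,1]^d$ a.s.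
   Context: Let $(\Omega,\mathcal F,\mathsf P)$ be a complete probability space and $L_0$ the set of all real random variables on it, with convergence in probability. A stochastic measure (SM) on a measurable space $(X,\mathcal B)$ is a $\sigma$-additive map $\mu:\mathcal B\to L_0$ (finitely additive, and $\mu(A_n)\to0$ in probability whenever $A_n\downarrow\emptyset$). Every bounded measurable deterministic function is integrable w.r.t. $\mu$, with $\int\sum_ic_i\mathbf 1_{A_i}d\mu=\sum_ic_i\mu(A_i)$ for simple functions. In the series defining $\tilde\xi$ all integrands are simple functions and the integrals are computed as linear combinations of values of $\mu$, using the fixed continuous version of $\mu$. For the continuous version, $\omega(\mu,r)=\sup\{|\mu(x+h)-\mu(x)|:\ x,x+h\in[0,1]^d,\ |h|\le r\}$ (Euclidean norm). One-dimensional Haar functions on $[0,1]$: $\chi_1\equiv1$; for $n=2^j+i$, $1\le i\le2^j$, $j\ge0$, put $\Delta_n^+=((i-1)2^{-j},(2i-1)2^{-j-1})$, $\Delta_n^-=((2i-1)2^{-j-1},i2^{-j})$, $\chi_n=2^{j/2}$ on $\Delta_n^+$, $-2^{j/2}$ on $\Delta_n^-$, $0$ outside $[(i-1)2^{-j},i2^{-j}]$; at discontinuity points in $(0,1)$ $\chi_n$ equals the average of its one-sided limits, $\chi_n(0)=\chi_n(0+)$, $\chi_n(1)=\chi_n(1-)$. Multivariate Haar functions $\chi^{(d)}_{n_1,\dots,n_d}(x)=\prod_{s=1}^d\chi_{n_s}(x_s)$, coefficients $c^{(d)}_{n_1,\dots,n_d}(g)=\int_{[0,1]^d}g\,\chi^{(d)}_{n_1,\dots,n_d}\,dx$,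 partial sums $S^{(d)}_{2^k}(g,x)=\sum_{(n_1,\dots,n_d)\in\{1,\dots,2^k\}^d}c^{(d)}_{n_1,\dots,n_d}(g)\chi^{(d)}_{n_1,\dots,n_d}(x)$. *)

theory Defs
  imports "HOL-Probability.Probability"
begin

definition conv_in_prob :: "'w measure \<Rightarrow> (nat \<Rightarrow> 'w \<Rightarrow> real) \<Rightarrow> ('w \<Rightarrow> real) \<Rightarrow> bool" where
  "conv_in_prob P X Y \<longleftrightarrow>
     (\<forall>e>0. (\<lambda>n. measure P {w \<in> space P. \<bar>X n w - Y w\<bar> > e}) \<longlonglongrightarrow> 0)"

text \<open>A stochastic measure on a measurable space X: a map from sets X into L0(P)
  (random variables, identified up to a.s. equality), finitely additive (a.s.)
  and continuous along decreasing sequences with empty intersection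
  (convergence in probability).\<close>
definition stochastic_measure :: "'w measure \<Rightarrow> 'x measure \<Rightarrow> ('x set \<Rightarrow> 'w \<Rightarrow> real) \<Rightarrow> bool" where
  "stochastic_measure P X \<mu> \<longleftrightarrow>
     (\<forall>A\<in>sets X. \<mu> A \<in> borel_measurable P) \<and>
     (\<forall>A\<in>sets X. \<forall>B\<in>sets X. A \<inter> B = {} \<longrightarrow> (AE w in P. \<mu> (A \<union> B) w = \<mu> A w + \<mu> B w)) \<and>
     (\<forall>An. (\<forall>n. An n \<in> sets X) \<and> decseq An \<and> (\<Inter>n. An n) = {} \<longrightarrow>
           conv_in_prob P (\<lambda>n. \<mu> (An n)) (\<lambda>_. 0))"

definition unit_cube :: "(real ^ 'd) set" where
  "unit_cube = cbox 0 (vec 1)"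

definition modulus :: "(real ^ 'd \<Rightarrow> real) \<Rightarrow> real \<Rightarrow> real" where
  "modulus F r = Sup {\<bar>F (x + h) - F x\<bar> | x h. x \<in> unit_cube \<and> x + h \<in> unit_cube \<and> norm h \<le> r}"

text \<open>C^m on the closed cube: partial derivatives of all orders up to m exist
  (one-sided at the boundary, i.e. within the cube) and are continuous on the cube.\<close>
definition cont_diff_cube :: "nat \<Rightarrow> (real ^ 'd \<Rightarrow> real) \<Rightarrow> bool" where
  "cont_diff_cube m f \<longleftrightarrow>
    (\<exists>D :: ('d \<Rightarrow> nat) \<Rightarrow> real ^ 'd \<Rightarrow> real.
       D (\<lambda>_. 0) = f \<and>
       (\<forall>\<alpha>. sum \<alpha> UNIV \<le> m \<longrightarrow> continuous_on unit_cube (D \<alpha>)) \<and>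
       (\<forall>\<alpha> s x. sum \<alpha> UNIV < m \<longrightarrow> x \<in> unit_cube \<longrightarrow>
          ((\<lambda>t. D \<alpha> (x + t *\<^sub>R axis s 1)) has_real_derivative D (\<alpha>(s := Suc (\<alpha> s))) x)
            (at 0 within {t. x + t *\<^sub>R axis s 1 \<in> unit_cube})))"

text \<open>For n \<ge> 2 write n = 2^j + i with 1 \<le> i \<le> 2^j.\<close>
definition haar_lev :: "nat \<Rightarrow> nat" where
  "haar_lev n = (THE j. 2 ^ j < n \<and> n \<le> 2 ^ Suc j)"

definition haar_pos :: "nat \<Rightarrow> nat" where
  "haar_pos n = n - 2 ^ haar_lev n"

definition haar :: "nat \<Rightarrow> real \<Rightarrow> real" where
  "haar n t =
    (if n = 1 then 1 else
     let j = haar_lev n; i = haar_pos n;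
         h = 2 powr (real j / 2);
         a = (real i - 1) / 2 ^ j; m = (2 * real i - 1) / 2 ^ Suc j; b = real i / 2 ^ j
     in if a < t \<and> t < m then h
        else if m < t \<and> t < b then - h
        else if t = m then 0
        else if t = a then (if a = 0 then h else h / 2)
        else if t = b then (if b = 1 then - h else - h / 2)
        else 0)"

definition haar_d :: "('d \<Rightarrow> nat) \<Rightarrow> real ^ 'd \<Rightarrow> real" where
  "haar_d n x = (\<Prod>s\<in>UNIV. haar (n s) (x $ s))"

definition haar_coeff :: "('d \<Rightarrow> nat) \<Rightarrow> (real ^ 'd \<Rightarrow> real) \<Rightarrow> real" where
  "haar_coeff n g = integral unit_cube (\<lambda>x. g x * haar_d n x)"

text \<open>haar_partial k g x is the partial sum S_{2^k}(g,x).\<close>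
definition haar_partial :: "nat \<Rightarrow> (real ^ 'd \<Rightarrow> real) \<Rightarrow> real ^ 'd \<Rightarrow> real" where
  "haar_partial k g x = (\<Sum>n\<in>Pi\<^sub>E UNIV (\<lambda>_. {1..2 ^ k}). haar_coeff n g * haar_d n x)"

text \<open>Rectangular increment of F over the closed box [a,b] (= value of the measure
  on the box, computed from the distribution-type function F by inclusion-exclusion);
  zero if the box is empty.\<close>
definition rect_incr :: "(real ^ 'd \<Rightarrow> real) \<Rightarrow> real ^ 'd \<Rightarrow> real ^ 'd \<Rightarrow> real" where
  "rect_incr F a b =
    (if \<forall>s. a $ s \<le> b $ s then
       (\<Sum>E\<in>(UNIV :: 'd set set). (-1) ^ card (UNIV - E) * F (\<chi> s. if s \<in> E then b $ s else a $ s))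
     else 0)"

text \<open>Integral over the box [0,y] of a function g which is constant on the open dyadic
  cells of level k, computed pathwise as a linear combination of values of the
  version F of the stochastic measure (boundaries of cells carry no mass).\<close>
definition dyadic_int :: "(real ^ 'd \<Rightarrow> real) \<Rightarrow> nat \<Rightarrow> (real ^ 'd \<Rightarrow> real) \<Rightarrow> real ^ 'd \<Rightarrow> real" where
  "dyadic_int F k g y =
    (\<Sum>j\<in>Pi\<^sub>E UNIV (\<lambda>_. {..<2 ^ k}).
       g (\<chi> s. (real (j s) + 1 / 2) / 2 ^ k) *
       rect_incr F (\<chi> s. real (j s) / 2 ^ k) (\<chi> s. min ((real (j s) + 1) / 2 ^ k) (y $ s)))"

definition xi_term :: "(real ^ 'd \<Rightarrow> real) \<Rightarrow> (real ^ 'd \<Rightarrow> real) \<Rightarrow> nat \<Rightarrow> real ^ 'd \<Rightarrow> real" where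
  "xi_term F f k y =
     dyadic_int F (Suc k) (\<lambda>x. haar_partial (Suc k) f x - haar_partial k f x) y"

definition xi_tilde :: "(real ^ 'd \<Rightarrow> real) \<Rightarrow> (real ^ 'd \<Rightarrow> real) \<Rightarrow> real ^ 'd \<Rightarrow> real" where
  "xi_tilde F f y = dyadic_int F 0 (haar_partial 0 f) y + (\<Sum>k. xi_term F f k y)"

end

theory Submission
  imports Defs
begin

definition ind :: "bool \<Rightarrow> real" where "ind b = (if b then 1 else 0)"

lemma prod_ind: "finite A \<Longrightarrow> (\<Prod>s\<in>A. ind (P s)) = ind (\<forall>s\<in>A. P s)"
  by (induction A rule: finite_induct) (auto simp: ind_def)

definition KK :: "nat \<Rightarrow> ('d::finite \<Rightarrow> nat) set" where
  "KK N = Pi\<^sub>E UNIV (\<lambda>_. {..N})"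

lemma finite_KK[simp]: "finite (KK N)"
  unfolding KK_def by (intro finite_PiE) auto

lemma prodsum_eval:
  fixes G :: "('d::finite \<Rightarrow> nat) \<Rightarrow> real"
  assumes "\<And>s. u s \<le> N" "\<And>s. v s \<le> N"
  shows "(\<Sum>k\<in>KK N. G k * (\<Prod>s\<in>UNIV. ind (k s = u s) - ind (k s = v s))) =
         (\<Sum>X\<in>UNIV. (-1) ^ card (UNIV - X) * G (\<lambda>s. if s \<in> X then u s else v s))"
proof -
  have 1: "(\<Prod>s\<in>UNIV. ind (k s = u s) - ind (k s = v s)) =
        (\<Sum>X\<in>UNIV. (-1) ^ card (UNIV - X) * ind (k = (\<lambda>s. if s \<in> X then u s else v s)))" for k
  proof -
    have "(\<Prod>s\<in>UNIV. ind (k s = u s) - ind (k s = v s)) =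
       (\<Sum>X\<in>Pow UNIV. (\<Prod>s\<in>X. ind (k s = u s)) * (\<Prod>s\<in>UNIV-X. - ind (k s = v s)))"
      using prod_add[of UNIV "\<lambda>s. ind (k s = u s)" "\<lambda>s. - ind (k s = v s)"] by simp
    also have "\<dots> = (\<Sum>X\<in>UNIV. (-1) ^ card (UNIV - X) * ind (k = (\<lambda>s. if s \<in> X then u s else v s)))"
    proof (rule sum.cong)
      fix X :: "'d set"
      have "(\<Prod>s\<in>UNIV-X. - ind (k s = v s)) = (-1) ^ card (UNIV - X) * (\<Prod>s\<in>UNIV-X. ind (k s = v s))"
      proof -
        have "(\<Prod>s\<in>UNIV-X. - ind (k s = v s)) = (\<Prod>s\<in>UNIV-X. (-1) * ind (k s = v s))" by simp
        also have "\<dots> = (-1) ^ card (UNIV - X) * (\<Prod>s\<in>UNIV-X. ind (k s = v s))"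
          by (simp only: prod.distrib prod_constant)
        finally show ?thesis .
      qed
      moreover have "(\<Prod>s\<in>X. ind (k s = u s)) * (\<Prod>s\<in>UNIV-X. ind (k s = v s))
          = ind (k = (\<lambda>s. if s \<in> X then u s else v s))"
        by (simp add: prod_ind ind_def fun_eq_iff) (metis Diff_iff UNIV_I)
      ultimately show "(\<Prod>s\<in>X. ind (k s = u s)) * (\<Prod>s\<in>UNIV-X. - ind (k s = v s)) =
          (-1) ^ card (UNIV - X) * ind (k = (\<lambda>s. if s \<in> X then u s else v s))"
        by (simp only: mult.left_commute[of "\<Prod>s\<in>X. ind (k s = u s)"])
    qed simp
    finally show ?thesis .
  qed
  have "(\<Sum>k\<in>KK N. G k * (\<Prod>s\<in>UNIV. ind (k s = u s) - ind (k s = v s))) =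
     (\<Sum>X\<in>UNIV. (-1) ^ card (UNIV - X) * (\<Sum>k\<in>KK N. G k * ind (k = (\<lambda>s. if s \<in> X then u s else v s))))" (is "_ = ?rhs")
  proof -
    have "(\<Sum>k\<in>KK N. G k * (\<Prod>s\<in>UNIV. ind (k s = u s) - ind (k s = v s))) =
      (\<Sum>k\<in>KK N. \<Sum>X\<in>UNIV. (-1) ^ card (UNIV - X) * (G k * ind (k = (\<lambda>s. if s \<in> X then u s else v s))))"
      by (simp only: 1 sum_distrib_left mult.left_commute)
    also have "\<dots> = (\<Sum>X\<in>UNIV. \<Sum>k\<in>KK N. (-1) ^ card (UNIV - X) * (G k * ind (k = (\<lambda>s. if s \<in> X then u s else v s))))"
      by (rule sum.swap)
    also have "\<dots> = ?rhs"
      by (simp only: sum_distrib_left)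
    finally show ?thesis .
  qed
  also have "\<dots> = (\<Sum>X\<in>UNIV. (-1) ^ card (UNIV - X) * G (\<lambda>s. if s \<in> X then u s else v s))"
  proof (rule sum.cong)
    fix X :: "'d set"
    have mem: "(\<lambda>s. if s \<in> X then u s else v s) \<in> KK N" using assms by (auto simp: KK_def)
    have "(\<Sum>k\<in>KK N. G k * ind (k = (\<lambda>s. if s \<in> X then u s else v s))) = G (\<lambda>s. if s \<in> X then u s else v s)"
    proof -
      have "(\<lambda>k. G k * ind (k = (\<lambda>s. if s \<in> X then u s else v s))) =
            (\<lambda>k. if (\<lambda>s. if s \<in> X then u s else v s) = k then G k else 0)"
        by (auto simp: ind_def fun_eq_iff)
      then show ?thesis using mem by (simp only: sum.delta) simp
    qed
    then show "(-1) ^ card (UNIV - X) * (\<Sum>k\<in>KK N. G k * ind (k = (\<lambda>s. if s \<in> X then u s else v s))) =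
        (-1) ^ card (UNIV - X) * G (\<lambda>s. if s \<in> X then u s else v s)" by simp
  qed simp
  finally show ?thesis .
qed

definition JJ :: "nat \<Rightarrow> ('d::finite \<Rightarrow> nat) set" where
  "JJ n = Pi\<^sub>E UNIV (\<lambda>_. {..<n})"

lemma finite_JJ[simp]: "finite (JJ N)"
  unfolding JJ_def by (intro finite_PiE) auto

definition DG :: "(('d::finite \<Rightarrow> nat) \<Rightarrow> real) \<Rightarrow> ('d \<Rightarrow> nat) \<Rightarrow> real" where
  "DG G j = (\<Sum>X\<in>UNIV. (-1) ^ card (UNIV - X) * G (\<lambda>s. if s \<in> X then Suc (j s) else j s))"

definition TG :: "nat \<Rightarrow> (('d::finite \<Rightarrow> nat) \<Rightarrow> real) \<Rightarrow> ('d \<Rightarrow> nat) \<Rightarrow> real" where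
  "TG n G i = (\<Sum>X\<in>UNIV. (-1) ^ card (UNIV - X) * G (\<lambda>s. if s \<in> X then n else i s))"

definition Dl :: "nat \<Rightarrow> (('d::finite \<Rightarrow> nat) \<Rightarrow> real) \<Rightarrow> ('d \<Rightarrow> nat) \<Rightarrow> real" where
  "Dl n g i = (\<Sum>m\<in>JJ n. g m * (\<Prod>s\<in>UNIV. ind (i s = m s) - ind (i s = Suc (m s))))"

lemma DG_kernel:
  assumes "\<And>s. j s < N"
  shows "DG G j = (\<Sum>k\<in>KK N. G k * (\<Prod>s\<in>UNIV. ind (k s = Suc (j s)) - ind (k s = j s)))"
  unfolding DG_def by (rule prodsum_eval[symmetric]) (use assms in \<open>auto simp: Suc_le_eq less_imp_le\<close>)

lemma TG_kernel:
  assumes "\<And>s. i s \<le> n"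
  shows "TG n G i = (\<Sum>k\<in>KK n. G k * (\<Prod>s\<in>UNIV. ind (k s = n) - ind (k s = i s)))"
  unfolding TG_def by (rule prodsum_eval[symmetric]) (use assms in auto)

lemma sum_ind_delta: "(\<Sum>t<n. ind (t = c) * \<phi> t) = (if c < n then \<phi> c else (0::real))" for c n :: nat
proof -
  have *: "(\<lambda>t. ind (t = c) * \<phi> t) = (\<lambda>t. if c = t then \<phi> t else 0)" by (auto simp: ind_def fun_eq_iff)
  show ?thesis unfolding * sum.delta'[OF finite_lessThan] by simp
qed

lemma kernel_1d:
  fixes m n k :: nat
  assumes "m < n" "k \<le> n"
  shows "(\<Sum>t<n. (ind (t = m) - ind (t = Suc m)) * (ind (k = n) - ind (k = t))) =
         ind (k = Suc m) - ind (k = m)"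
proof -
  have "(\<Sum>t<n. (ind (t = m) - ind (t = Suc m)) * (ind (k = n) - ind (k = t))) =
     (\<Sum>t<n. ind (t = m) * (ind (k = n) - ind (k = t))) - (\<Sum>t<n. ind (t = Suc m) * (ind (k = n) - ind (k = t)))"
    by (simp add: left_diff_distrib sum_subtractf)
  also have "\<dots> = (ind (k = n) - ind (k = m)) - (if Suc m < n then ind (k = n) - ind (k = Suc m) else 0)"
    by (simp only: sum_ind_delta assms if_True)
  also have "\<dots> = ind (k = Suc m) - ind (k = m)"
    using assms by (auto simp: ind_def)
  finally show ?thesis .
qed

lemma kernel_dd:
  assumes "m \<in> JJ n" "k \<in> KK n"
  shows "(\<Sum>i\<in>JJ n. (\<Prod>s\<in>UNIV. ind (i s = m s) - ind (i s = Suc (m s))) *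
                    (\<Prod>s\<in>UNIV. ind (k s = n) - ind (k s = i s))) =
         (\<Prod>s\<in>UNIV. ind (k s = Suc (m s)) - ind (k s = m s))"
proof -
  have "(\<Sum>i\<in>JJ n. (\<Prod>s\<in>UNIV. ind (i s = m s) - ind (i s = Suc (m s))) *
                    (\<Prod>s\<in>UNIV. ind (k s = n) - ind (k s = i s))) =
        (\<Sum>i\<in>JJ n. \<Prod>s\<in>UNIV. (ind (i s = m s) - ind (i s = Suc (m s))) * (ind (k s = n) - ind (k s = i s)))"
    by (simp only: prod.distrib)
  also have "\<dots> = (\<Prod>s\<in>UNIV. \<Sum>t<n. (ind (t = m s) - ind (t = Suc (m s))) * (ind (k s = n) - ind (k s = t)))"
    unfolding JJ_def by (rule prod_sum_PiE[symmetric]) auto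
  also have "\<dots> = (\<Prod>s\<in>UNIV. ind (k s = Suc (m s)) - ind (k s = m s))"
    using assms by (intro prod.cong refl kernel_1d) (auto simp: JJ_def KK_def)
  finally show ?thesis .
qed

theorem summation_by_parts:
  fixes g G :: "('d::finite \<Rightarrow> nat) \<Rightarrow> real"
  shows "(\<Sum>j\<in>JJ n. g j * DG G j) = (\<Sum>i\<in>JJ n. Dl n g i * TG n G i)"
proof -
  define A where "A m i = (\<Prod>s\<in>UNIV. ind (i s = m s) - ind (i s = Suc (m s)))" for m i :: "'d \<Rightarrow> nat"
  define B where "B k i = (\<Prod>s\<in>UNIV. ind (k s = n) - ind (k s = i s))" for k i :: "'d \<Rightarrow> nat"
  define L where "L m k = (\<Prod>s\<in>UNIV. ind (k s = Suc (m s)) - ind (k s = m s))" for k m :: "'d \<Rightarrow> nat"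
  have lhs: "(\<Sum>j\<in>JJ n. g j * DG G j) = (\<Sum>m\<in>JJ n. \<Sum>k\<in>KK n. g m * G k * L m k)"
  proof (rule sum.cong[OF refl])
    fix m :: "'d \<Rightarrow> nat" assume "m \<in> JJ n"
    then have "DG G m = (\<Sum>k\<in>KK n. G k * L m k)"
      unfolding L_def by (intro DG_kernel) (auto simp: JJ_def)
    then show "g m * DG G m = (\<Sum>k\<in>KK n. g m * G k * L m k)"
      by (simp add: sum_distrib_left mult.assoc)
  qed
  have rhs1: "Dl n g i * TG n G i = (\<Sum>m\<in>JJ n. \<Sum>k\<in>KK n. g m * G k * (A m i * B k i))" if "i \<in> JJ n" for i
  proof -
    have "TG n G i = (\<Sum>k\<in>KK n. G k * B k i)"
      unfolding B_def using that by (intro TG_kernel) (auto simp: JJ_def PiE_iff intro: less_imp_le)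
    moreover have "Dl n g i = (\<Sum>m\<in>JJ n. g m * A m i)" unfolding Dl_def A_def ..
    ultimately show ?thesis by (simp only: sum_product) (simp add: mult_ac)
  qed
  have "(\<Sum>i\<in>JJ n. Dl n g i * TG n G i) = (\<Sum>i\<in>JJ n. \<Sum>m\<in>JJ n. \<Sum>k\<in>KK n. g m * G k * (A m i * B k i))"
    by (rule sum.cong[OF refl]) (rule rhs1)
  also have "\<dots> = (\<Sum>m\<in>JJ n. \<Sum>i\<in>JJ n. \<Sum>k\<in>KK n. g m * G k * (A m i * B k i))"
    by (rule sum.swap)
  also have "\<dots> = (\<Sum>m\<in>JJ n. \<Sum>k\<in>KK n. \<Sum>i\<in>JJ n. g m * G k * (A m i * B k i))"
    by (rule sum.cong[OF refl]) (rule sum.swap)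
  also have "\<dots> = (\<Sum>m\<in>JJ n. \<Sum>k\<in>KK n. g m * G k * L m k)"
  proof (intro sum.cong refl)
    fix m k :: "'d \<Rightarrow> nat" assume "m \<in> JJ n" "k \<in> KK n"
    then have "(\<Sum>i\<in>JJ n. A m i * B k i) = L m k"
      unfolding A_def B_def L_def by (rule kernel_dd)
    then show "(\<Sum>i\<in>JJ n. g m * G k * (A m i * B k i)) = g m * G k * L m k"
      by (simp add: sum_distrib_left[symmetric])
  qed
  finally show ?thesis using lhs by simp
qed

lemma refine_1d:
  fixes m n k r :: nat
  assumes "m < n" "0 < r"
  shows "(\<Sum>t<r*n. ind (t div r = m) * (ind (k = Suc t) - ind (k = t))) = ind (k = r*m + r) - ind (k = r*m)"
proof -
  have set: "{t \<in> {..<r*n}. t div r = m} = {r*m..<r*m+r}"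
  proof (intro set_eqI iffI)
    fix t assume "t \<in> {t \<in> {..<r*n}. t div r = m}"
    then have "t div r = m" by simp
    then show "t \<in> {r*m..<r*m+r}" using assms times_div_less_eq_dividend[of r t] dividend_less_times_div[of r t]
      by auto
  next
    fix t assume t: "t \<in> {r*m..<r*m+r}"
    then have "t div r = m" using assms by (intro div_nat_eqI) auto
    moreover have "t < r*n"
    proof -
      have "r*m + r \<le> r*n" using assms by (metis Suc_leI mult_Suc_right mult_le_mono2 add.commute)
      then show ?thesis using t by simp
    qed
    ultimately show "t \<in> {t \<in> {..<r*n}. t div r = m}" by simp
  qed
  have "(\<Sum>t<r*n. ind (t div r = m) * (ind (k = Suc t) - ind (k = t))) =
        (\<Sum>t\<in>{t \<in> {..<r*n}. t div r = m}. ind (k = Suc t) - ind (k = t))"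
    by (subst sum.inter_filter) (auto simp: ind_def intro!: sum.cong)
  also have "\<dots> = (\<Sum>t=r*m..<r*m+r. ind (k = Suc t) - ind (k = t))" by (simp only: set)
  also have "\<dots> = ind (k = r*m + r) - ind (k = r*m)"
    by (rule sum_Suc_diff'[of "r*m" "r*m+r" "\<lambda>t. ind (k = t)"]) simp
  finally show ?thesis .
qed

theorem refinement:
  fixes g G :: "('d::finite \<Rightarrow> nat) \<Rightarrow> real"
  assumes r: "0 < r"
  shows "(\<Sum>j\<in>JJ (r*n). g (\<lambda>s. j s div r) * DG G j) = (\<Sum>m\<in>JJ n. g m * DG (\<lambda>i. G (\<lambda>s. r * i s)) m)"
proof -
  define L where "L m k = (\<Prod>s\<in>UNIV. ind (k s = Suc (m s)) - ind (k s = m s))" for k m :: "'d \<Rightarrow> nat"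
  have divmem: "(\<lambda>s. j s div r) \<in> JJ n" if "j \<in> JJ (r*n)" for j :: "'d \<Rightarrow> nat"
    using that r by (auto simp: JJ_def PiE_iff less_mult_imp_div_less mult.commute)
  have "(\<Sum>j\<in>JJ (r*n). g (\<lambda>s. j s div r) * DG G j) =
        (\<Sum>j\<in>JJ (r*n). \<Sum>m\<in>JJ n. \<Sum>k\<in>KK (r*n). g m * G k * (ind ((\<lambda>s. j s div r) = m) * L j k))"
  proof (rule sum.cong[OF refl])
    fix j :: "'d \<Rightarrow> nat" assume j: "j \<in> JJ (r*n)"
    have "DG G j = (\<Sum>k\<in>KK (r*n). G k * L j k)"
      unfolding L_def using j by (intro DG_kernel) (auto simp: JJ_def PiE_iff)
    moreover have "g (\<lambda>s. j s div r) = (\<Sum>m\<in>JJ n. g m * ind ((\<lambda>s. j s div r) = m))"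
    proof -
      have *: "(\<lambda>m. g m * ind ((\<lambda>s. j s div r) = m)) = (\<lambda>m. if (\<lambda>s. j s div r) = m then g m else 0)"
        by (auto simp: ind_def fun_eq_iff)
      show ?thesis unfolding * sum.delta'[OF finite_JJ] using divmem[OF j] by simp
    qed
    ultimately show "g (\<lambda>s. j s div r) * DG G j =
        (\<Sum>m\<in>JJ n. \<Sum>k\<in>KK (r*n). g m * G k * (ind ((\<lambda>s. j s div r) = m) * L j k))"
      by (simp only: sum_product) (simp add: mult_ac)
  qed
  also have "\<dots> = (\<Sum>m\<in>JJ n. \<Sum>j\<in>JJ (r*n). \<Sum>k\<in>KK (r*n). g m * G k * (ind ((\<lambda>s. j s div r) = m) * L j k))"
    by (rule sum.swap)
  also have "\<dots> = (\<Sum>m\<in>JJ n. \<Sum>k\<in>KK (r*n). \<Sum>j\<in>JJ (r*n). g m * G k * (ind ((\<lambda>s. j s div r) = m) * L j k))"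
    by (rule sum.cong[OF refl]) (rule sum.swap)
  also have "\<dots> = (\<Sum>m\<in>JJ n. \<Sum>k\<in>KK (r*n). g m * G k * (\<Prod>s\<in>UNIV. ind (k s = r * m s + r) - ind (k s = r * m s)))"
  proof (intro sum.cong refl)
    fix m k :: "'d \<Rightarrow> nat" assume m: "m \<in> JJ n" and "k \<in> KK (r*n)"
    have "(\<Sum>j\<in>JJ (r*n). ind ((\<lambda>s. j s div r) = m) * L j k) =
          (\<Sum>j\<in>JJ (r*n). \<Prod>s\<in>UNIV. ind (j s div r = m s) * (ind (k s = Suc (j s)) - ind (k s = j s)))"
    proof (rule sum.cong[OF refl])
      fix j :: "'d \<Rightarrow> nat"
      have "ind ((\<lambda>s. j s div r) = m) = (\<Prod>s\<in>UNIV. ind (j s div r = m s))"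
        by (simp add: prod_ind fun_eq_iff)
      then show "ind ((\<lambda>s. j s div r) = m) * L j k =
          (\<Prod>s\<in>UNIV. ind (j s div r = m s) * (ind (k s = Suc (j s)) - ind (k s = j s)))"
        unfolding L_def by (simp add: prod.distrib)
    qed
    also have "\<dots> = (\<Prod>s\<in>UNIV. \<Sum>t<r*n. ind (t div r = m s) * (ind (k s = Suc t) - ind (k s = t)))"
      unfolding JJ_def by (rule prod_sum_PiE[symmetric]) auto
    also have "\<dots> = (\<Prod>s\<in>UNIV. ind (k s = r * m s + r) - ind (k s = r * m s))"
      using m r by (intro prod.cong refl refine_1d) (auto simp: JJ_def PiE_iff)
    finally show "(\<Sum>j\<in>JJ (r*n). g m * G k * (ind ((\<lambda>s. j s div r) = m) * L j k)) =
        g m * G k * (\<Prod>s\<in>UNIV. ind (k s = r * m s + r) - ind (k s = r * m s))"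
      by (simp add: sum_distrib_left[symmetric])
  qed
  also have "\<dots> = (\<Sum>m\<in>JJ n. g m * DG (\<lambda>i. G (\<lambda>s. r * i s)) m)"
  proof (rule sum.cong[OF refl])
    fix m :: "'d \<Rightarrow> nat" assume m: "m \<in> JJ n"
    have le: "r * m s + r \<le> r * n" "r * m s \<le> r * n" for s
    proof -
      have "m s < n" using m by (auto simp: JJ_def PiE_iff)
      then show "r * m s + r \<le> r * n" by (metis Suc_leI mult_Suc_right mult_le_mono2 add.commute)
      then show "r * m s \<le> r * n" by linarith
    qed
    have "(\<Sum>k\<in>KK (r*n). G k * (\<Prod>s\<in>UNIV. ind (k s = r * m s + r) - ind (k s = r * m s))) =
        (\<Sum>X\<in>UNIV. (-1) ^ card (UNIV - X) * G (\<lambda>s. if s \<in> X then r * m s + r else r * m s))"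
      by (rule prodsum_eval) (use le in auto)
    also have "\<dots> = DG (\<lambda>i. G (\<lambda>s. r * i s)) m"
      unfolding DG_def by (intro sum.cong refl arg_cong[where f="\<lambda>x. _ * G x"]) (auto simp: fun_eq_iff)
    finally show "(\<Sum>k\<in>KK (r*n). g m * G k * (\<Prod>s\<in>UNIV. ind (k s = r * m s + r) - ind (k s = r * m s))) =
        g m * DG (\<lambda>i. G (\<lambda>s. r * i s)) m"
      by (simp add: sum_distrib_left[symmetric] mult.assoc)
  qed
  finally show ?thesis .
qed

section \<open>Rectangular increments\<close>

definition RRT :: "'d::finite set \<Rightarrow> (real^'d \<Rightarrow> real) \<Rightarrow> real^'d \<Rightarrow> real^'d \<Rightarrow> real" where
  "RRT T F a b = (\<Sum>E\<in>Pow T. (-1) ^ card (T - E) * F (\<chi> s. if s \<in> E then b$s else a$s))"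

abbreviation RR :: "(real^'d::finite \<Rightarrow> real) \<Rightarrow> real^'d \<Rightarrow> real^'d \<Rightarrow> real" where
  "RR F a b \<equiv> RRT UNIV F a b"

definition vupd :: "real^'d \<Rightarrow> 'd \<Rightarrow> real \<Rightarrow> real^'d" where
  "vupd a s v = (\<chi> i. if i = s then v else a$i)"

lemma RRT_insert:
  assumes "finite T" "s \<notin> T"
  shows "RRT (insert s T) F a b = RRT T F (vupd a s (b$s)) b - RRT T F a b"
proof -
  have disj: "Pow T \<inter> insert s ` Pow T = {}" using assms by auto
  have inj: "inj_on (insert s) (Pow T)"
  proof (rule inj_onI)
    fix A B assume AB: "A \<in> Pow T" "B \<in> Pow T" "insert s A = insert s B"
    then have "A = insert s A - {s}" "B = insert s B - {s}" using assms(2) by auto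
    then show "A = B" using AB(3) by simp
  qed
  have "RRT (insert s T) F a b =
     (\<Sum>E\<in>Pow T. (-1) ^ card (insert s T - E) * F (\<chi> i. if i \<in> E then b$i else a$i)) +
     (\<Sum>E\<in>insert s ` Pow T. (-1) ^ card (insert s T - E) * F (\<chi> i. if i \<in> E then b$i else a$i))"
    unfolding RRT_def Pow_insert using assms disj by (intro sum.union_disjoint) auto
  also have "(\<Sum>E\<in>insert s ` Pow T. (-1) ^ card (insert s T - E) * F (\<chi> i. if i \<in> E then b$i else a$i)) =
      (\<Sum>E\<in>Pow T. (-1) ^ card (insert s T - insert s E) * F (\<chi> i. if i \<in> insert s E then b$i else a$i))"
    by (rule sum.reindex[OF inj, unfolded comp_def])
  also have "\<dots> = RRT T F (vupd a s (b$s)) b"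
    unfolding RRT_def
  proof (rule sum.cong[OF refl])
    fix E assume "E \<in> Pow T"
    then have "insert s T - insert s E = T - E" using assms by auto
    moreover have "(\<chi> i. if i \<in> insert s E then b$i else a$i) = (\<chi> i. if i \<in> E then b$i else vupd a s (b$s) $ i)"
      by (auto simp: vec_eq_iff vupd_def)
    ultimately show "(-1) ^ card (insert s T - insert s E) * F (\<chi> i. if i \<in> insert s E then b$i else a$i) =
      (-1) ^ card (T - E) * F (\<chi> i. if i \<in> E then b$i else vupd a s (b$s) $ i)" by simp
  qed
  also have "(\<Sum>E\<in>Pow T. (-1) ^ card (insert s T - E) * F (\<chi> i. if i \<in> E then b$i else a$i)) = - RRT T F a b"
    unfolding RRT_def sum_negf[symmetric]
  proof (rule sum.cong[OF refl])
    fix E assume E: "E \<in> Pow T"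
    then have "insert s T - E = insert s (T - E)" using assms by auto
    moreover have "finite (T - E)" using assms by auto
    moreover have "s \<notin> T - E" using assms by auto
    ultimately have "card (insert s T - E) = Suc (card (T - E))" by simp
    then show "(-1) ^ card (insert s T - E) * F (\<chi> i. if i \<in> E then b$i else a$i) =
       - ((-1) ^ card (T - E) * F (\<chi> s. if s \<in> E then b$s else a$s))" by simp
  qed
  finally show ?thesis by simp
qed

lemma vupd_same: "vupd a s (a$s) = a"
  by (simp add: vupd_def vec_eq_iff)

lemma RRT_degen:
  assumes "finite T" "s \<in> T" "a$s = b$s"
  shows "RRT T F a b = 0"
proof -
  have "T = insert s (T - {s})" using assms by auto
  then have "RRT T F a b = RRT (T - {s}) F (vupd a s (b$s)) b - RRT (T - {s}) F a b"
    using RRT_insert[of "T - {s}" s F a b] assms by simp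
  then show ?thesis using assms(3) vupd_same[of a s] by simp
qed

lemma RR_linear: "RR (\<lambda>x. F x - F' x) a b = RR F a b - RR F' a b"
  unfolding RRT_def by (simp add: right_diff_distrib sum_subtractf)

lemma card_Pow_UNIV: "card (UNIV :: 'd::finite set set) = 2 ^ CARD('d)"
  using card_Pow[of "UNIV :: 'd set"] by simp

lemma RR_bound:
  fixes a b :: "real^'d::finite"
  assumes "\<And>x. x \<in> unit_cube \<Longrightarrow> \<bar>F x\<bar> \<le> B" "a \<in> unit_cube" "b \<in> unit_cube"
  shows "\<bar>RR F a b\<bar> \<le> 2 ^ CARD('d) * B"
proof -
  have "\<bar>RR F a b\<bar> \<le> (\<Sum>E\<in>Pow UNIV. \<bar>(-1) ^ card (UNIV - E) * F (\<chi> s. if s \<in> E then b$s else a$s)\<bar>)"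
    unfolding RRT_def by (rule sum_abs)
  also have "\<dots> \<le> (\<Sum>E\<in>Pow (UNIV::'d set). B)"
  proof (rule sum_mono)
    fix E :: "'d set"
    have "(\<chi> s. if s \<in> E then b$s else a$s) \<in> unit_cube"
      using assms(2,3) by (auto simp: unit_cube_def mem_box_cart)
    then show "\<bar>(-1) ^ card (UNIV - E) * F (\<chi> s. if s \<in> E then b$s else a$s)\<bar> \<le> B"
      using assms(1) by (simp add: abs_mult)
  qed
  also have "\<dots> = 2 ^ CARD('d) * B" using card_Pow_UNIV by simp
  finally show ?thesis .
qed

definition pt :: "nat \<Rightarrow> real^'d \<Rightarrow> ('d \<Rightarrow> nat) \<Rightarrow> real^'d" where
  "pt k y i = (\<chi> s. min (real (i s) / 2^k) (y$s))"

lemma cube_iff: "x \<in> unit_cube \<longleftrightarrow> (\<forall>s. 0 \<le> x$s \<and> x$s \<le> 1)"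
  by (simp add: unit_cube_def mem_box_cart)

lemma mix_in_cube: "a \<in> unit_cube \<Longrightarrow> b \<in> unit_cube \<Longrightarrow> (\<chi> s. if s \<in> E then b$s else a$s) \<in> unit_cube"
  by (auto simp: cube_iff)

lemma pt_in_cube: "y \<in> unit_cube \<Longrightarrow> pt k y i \<in> unit_cube"
  by (auto simp: cube_iff pt_def min_le_iff_disj)

lemma DG_pt: "DG (\<lambda>i. F (pt k y i)) j = RR F (pt k y j) (pt k y (\<lambda>s. Suc (j s)))"
  unfolding DG_def RRT_def Pow_UNIV
  by (intro sum.cong refl arg_cong[where f="\<lambda>x. _ * F x"]) (auto simp: pt_def vec_eq_iff)

lemma rect_pt:
  assumes y: "y \<in> unit_cube"
  shows "rect_incr F (\<chi> s. real (j s) / 2 ^ k) (\<chi> s. min ((real (j s) + 1) / 2 ^ k) (y $ s)) =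
         RR F (pt k y j) (pt k y (\<lambda>s. Suc (j s)))"
proof (cases "\<forall>s. real (j s) / 2 ^ k \<le> min ((real (j s) + 1) / 2 ^ k) (y $ s)")
  case True
  have e1: "pt k y j = (\<chi> s. real (j s) / 2 ^ k)" using True by (auto simp: pt_def vec_eq_iff)
  have e2: "pt k y (\<lambda>s. Suc (j s)) = (\<chi> s. min ((real (j s) + 1) / 2 ^ k) (y $ s))"
    by (auto simp: pt_def vec_eq_iff add.commute)
  show ?thesis unfolding e1 e2 rect_incr_def RRT_def Pow_UNIV using True by simp
next
  case False
  then obtain s where s: "real (j s) / 2 ^ k > min ((real (j s) + 1) / 2 ^ k) (y $ s)" using not_le by blast
  have lt: "real (j s) / 2 ^ k < (real (j s) + 1) / 2 ^ k" by (simp add: divide_strict_right_mono)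
  then have ys: "y$s < real (j s) / 2 ^ k" using s by linarith
  then have "pt k y j $ s = pt k y (\<lambda>s. Suc (j s)) $ s"
    using lt by (simp add: pt_def min_def add.commute)
  then have "RR F (pt k y j) (pt k y (\<lambda>s. Suc (j s))) = 0" by (intro RRT_degen) auto
  moreover have "rect_incr F (\<chi> s. real (j s) / 2 ^ k) (\<chi> s. min ((real (j s) + 1) / 2 ^ k) (y $ s)) = 0"
    using False unfolding rect_incr_def by auto
  ultimately show ?thesis by simp
qed

lemma pt_top: "y \<in> unit_cube \<Longrightarrow> pt k y (\<lambda>_. 2^k) = y"
  by (auto simp: pt_def vec_eq_iff cube_iff)

lemma TG_pt: "y \<in> unit_cube \<Longrightarrow> TG (2^k) (\<lambda>i. F (pt k y i)) i = RR F (pt k y i) y"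
  unfolding TG_def RRT_def Pow_UNIV
  by (intro sum.cong refl arg_cong[where f="\<lambda>x. _ * F x"]) (auto simp: pt_def vec_eq_iff cube_iff)

lemma pt_scale: "pt (k + l) y (\<lambda>s. 2^l * i s) = pt k y i"
  by (simp add: pt_def vec_eq_iff power_add)

section \<open>The approximants\<close>

definition lo :: "nat \<Rightarrow> ('d \<Rightarrow> nat) \<Rightarrow> real^'d" where
  "lo N m = (\<chi> s. real (m s) / 2^N)"

definition hi :: "nat \<Rightarrow> ('d \<Rightarrow> nat) \<Rightarrow> real^'d" where
  "hi N m = (\<chi> s. (real (m s) + 1) / 2^N)"

definition avgc :: "nat \<Rightarrow> (real^'d::finite \<Rightarrow> real) \<Rightarrow> ('d \<Rightarrow> nat) \<Rightarrow> real" where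
  "avgc N f m = 2 ^ (N * CARD('d)) * integral (cbox (lo N m) (hi N m)) f"

definition Phi :: "(real^'d::finite \<Rightarrow> real) \<Rightarrow> (real^'d \<Rightarrow> real) \<Rightarrow> nat \<Rightarrow> real^'d \<Rightarrow> real" where
  "Phi F f N y = (\<Sum>j\<in>JJ (2^N). avgc N f j * RR F (pt N y j) (pt N y (\<lambda>s. Suc (j s))))"

lemma Phi_sbp:
  assumes "y \<in> unit_cube"
  shows "Phi F f N y = (\<Sum>i\<in>JJ (2^N). Dl (2^N) (avgc N f) i * RR F (pt N y i) y)"
  using summation_by_parts[of "avgc N f" "\<lambda>i. F (pt N y i)" "2^N"]
  unfolding Phi_def DG_pt TG_pt[OF assms] .

lemma Phi_refine:
  assumes "y \<in> unit_cube"
  shows "Phi F f N y = (\<Sum>j\<in>JJ (2^(N+l)). avgc N f (\<lambda>s. j s div 2^l) *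
             RR F (pt (N+l) y j) (pt (N+l) y (\<lambda>s. Suc (j s))))"
proof -
  have "(\<Sum>j\<in>JJ (2^l * 2^N). avgc N f (\<lambda>s. j s div 2^l) * DG (\<lambda>i. F (pt (N+l) y i)) j) =
        (\<Sum>m\<in>JJ (2^N). avgc N f m * DG (\<lambda>i. F (pt (N+l) y (\<lambda>s. 2^l * i s))) m)"
    by (rule refinement) simp
  moreover have "(\<lambda>i. F (pt (N+l) y (\<lambda>s. 2^l * i s))) = (\<lambda>i. F (pt N y i))"
    by (simp add: pt_scale)
  moreover have "(2::nat)^l * 2^N = 2^(N+l)" by (simp add: power_add)
  ultimately show ?thesis unfolding Phi_def by (simp add: DG_pt)
qed

lemma Phi_diff: "Phi F f N y - Phi F' f N y = Phi (\<lambda>x. F x - F' x) f N y"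
  unfolding Phi_def RR_linear by (simp add: right_diff_distrib sum_subtractf)

lemma continuous_on_RR:
  fixes F :: "real^'d::finite \<Rightarrow> real" and i j :: "'d \<Rightarrow> nat"
  assumes "continuous_on unit_cube F"
  shows "continuous_on unit_cube (\<lambda>y. RR F (pt N y i) (pt N y j))"
  unfolding RRT_def
proof (intro continuous_intros)
  fix E :: "'d set"
  have "continuous_on unit_cube (\<lambda>y. (\<chi> s. if s \<in> E then pt N y j $ s else pt N y i $ s))"
    unfolding pt_def vec_lambda_beta
  proof (intro continuous_on_vec_lambda)
    fix s :: 'd
    show "continuous_on unit_cube (\<lambda>x. if s \<in> E then min (real (j s) / 2 ^ N) (x $ s) else min (real (i s) / 2 ^ N) (x $ s))"
      by (cases "s \<in> E") (auto intro!: continuous_intros)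
  qed
  moreover have "(\<lambda>y. (\<chi> s. if s \<in> E then pt N y j $ s else pt N y i $ s)) ` unit_cube \<subseteq> unit_cube"
    using pt_in_cube[of _ N] mix_in_cube by blast
  ultimately show "continuous_on unit_cube (\<lambda>y. F (\<chi> s. if s \<in> E then pt N y j $ s else pt N y i $ s))"
    by (rule continuous_on_compose2[OF assms])
qed

lemma continuous_on_Phi:
  assumes "continuous_on unit_cube F"
  shows "continuous_on unit_cube (Phi F f N)"
  unfolding Phi_def by (intro continuous_intros continuous_on_RR assms)

section \<open>Mixed differences of smooth functions\<close>

definition ms :: "'d set \<Rightarrow> 'd \<Rightarrow> nat" where
  "ms U = (\<lambda>s. if s \<in> U then 1 else 0)"

lemma sum_ms: "sum (ms U) (UNIV :: 'd::finite set) = card U"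
  by (simp add: ms_def sum.If_cases)

lemma ms_insert: "s \<notin> U \<Longrightarrow> (ms U)(s := Suc (ms U s)) = ms (insert s U)"
  by (auto simp: ms_def fun_eq_iff)

lemma axis_add_nth: "(x + t *\<^sub>R axis s 1) $ i = x $ i + (if i = s then t else 0)"
  by (simp add: axis_def)

lemma within_to_at:
  fixes x :: "real^'d::finite"
  assumes "(g has_real_derivative d) (at 0 within {t. x + t *\<^sub>R axis s 1 \<in> unit_cube})"
    and "x \<in> unit_cube" "0 < x$s" "x$s < 1"
  shows "(g has_real_derivative d) (at 0)"
proof -
  have sub: "{-(x$s)<..<1 - x$s} \<subseteq> {t. x + t *\<^sub>R axis s 1 \<in> unit_cube}"
    using assms(2) by (auto simp: cube_iff axis_def)
  have "(g has_real_derivative d) (at 0 within {-(x$s)<..<1 - x$s})"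
    by (rule DERIV_subset[OF assms(1) sub])
  moreover have "at 0 within {-(x$s)<..<1 - x$s} = at 0"
    by (rule at_within_open) (use assms in auto)
  ultimately show ?thesis by simp
qed

lemma Dl_expand:
  fixes g :: "('d::finite \<Rightarrow> nat) \<Rightarrow> real"
  assumes i: "i \<in> JJ n"
  shows "Dl n g i = (\<Sum>E\<in>Pow {s. i s \<noteq> 0}. (-1) ^ card E * g (\<lambda>s. if s \<in> E then i s - 1 else i s))"
proof -
  define S where "S = {s. i s \<noteq> 0}"
  define w where "w E = (\<lambda>s. if s \<in> E then i s - 1 else i s)" for E
  have star: "(\<Prod>s\<in>UNIV. ind (i s = m s) - ind (i s = Suc (m s))) =
      (\<Sum>E\<in>Pow S. (-1) ^ card E * ind (m = w E))" for m
  proof -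
    have "(\<Prod>s\<in>UNIV. ind (i s = m s) - ind (i s = Suc (m s))) =
          (\<Prod>s\<in>UNIV. (- ind (s \<in> S \<and> m s = i s - 1)) + ind (m s = i s))"
      by (intro prod.cong refl) (auto simp: ind_def S_def)
    also have "\<dots> = (\<Sum>E\<in>Pow UNIV. (\<Prod>s\<in>E. - ind (s \<in> S \<and> m s = i s - 1)) * (\<Prod>s\<in>UNIV - E. ind (m s = i s)))"
      by (rule prod_add) simp
    also have "\<dots> = (\<Sum>E\<in>Pow UNIV. ind (E \<subseteq> S) * ((-1) ^ card E * ind (m = w E)))"
    proof (rule sum.cong[OF refl])
      fix E :: "'d set"
      have "(\<Prod>s\<in>E. - ind (s \<in> S \<and> m s = i s - 1)) = (\<Prod>s\<in>E. (-1) * ind (s \<in> S \<and> m s = i s - 1))" by simp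
      also have "\<dots> = (-1) ^ card E * (\<Prod>s\<in>E. ind (s \<in> S \<and> m s = i s - 1))"
        by (simp only: prod.distrib prod_constant)
      finally have 1: "(\<Prod>s\<in>E. - ind (s \<in> S \<and> m s = i s - 1)) = (-1) ^ card E * ind (\<forall>s\<in>E. s \<in> S \<and> m s = i s - 1)"
        by (simp add: prod_ind)
      have 2: "ind (\<forall>s\<in>E. s \<in> S \<and> m s = i s - 1) * ind (\<forall>s\<in>UNIV - E. m s = i s) = ind (E \<subseteq> S) * ind (m = w E)"
        by (auto simp: ind_def w_def fun_eq_iff)
      show "(\<Prod>s\<in>E. - ind (s \<in> S \<and> m s = i s - 1)) * (\<Prod>s\<in>UNIV - E. ind (m s = i s)) =
          ind (E \<subseteq> S) * ((-1) ^ card E * ind (m = w E))"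
        unfolding 1 prod_ind[OF finite] using 2 by (simp add: mult_ac)
    qed
    also have "\<dots> = (\<Sum>E\<in>{E \<in> Pow UNIV. E \<subseteq> S}. (-1) ^ card E * ind (m = w E))"
      by (subst sum.inter_filter) (auto simp: ind_def intro!: sum.cong)
    also have "{E \<in> Pow UNIV. E \<subseteq> S} = Pow S" by auto
    finally show ?thesis .
  qed
  have wJ: "w E \<in> JJ n" for E
    using i by (auto simp: JJ_def PiE_iff w_def less_imp_diff_less)
  have "Dl n g i = (\<Sum>m\<in>JJ n. \<Sum>E\<in>Pow S. (-1) ^ card E * (g m * ind (m = w E)))"
    unfolding Dl_def star by (simp add: sum_distrib_left mult_ac)
  also have "\<dots> = (\<Sum>E\<in>Pow S. \<Sum>m\<in>JJ n. (-1) ^ card E * (g m * ind (m = w E)))"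
    by (rule sum.swap)
  also have "\<dots> = (\<Sum>E\<in>Pow S. (-1) ^ card E * g (w E))"
  proof (rule sum.cong[OF refl])
    fix E
    have *: "(\<lambda>m. g m * ind (m = w E)) = (\<lambda>m. if w E = m then g m else 0)"
      by (auto simp: ind_def fun_eq_iff)
    show "(\<Sum>m\<in>JJ n. (-1) ^ card E * (g m * ind (m = w E))) = (-1) ^ card E * g (w E)"
      unfolding sum_distrib_left[symmetric] * sum.delta'[OF finite_JJ] using wJ by simp
  qed
  finally show ?thesis unfolding S_def w_def .
qed

lemma cell_sub: "m \<in> JJ (2^N) \<Longrightarrow> cbox (lo N m) (hi N m) \<subseteq> unit_cube"
proof
  fix x assume m: "m \<in> JJ (2^N)" and x: "x \<in> cbox (lo N m) (hi N m)"
  show "x \<in> unit_cube" unfolding cube_iff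
  proof
    fix s
    have "m s < 2^N" using m by (auto simp: JJ_def PiE_iff)
    then have "real (m s) + 1 \<le> 2^N"
      by (metis Suc_leI of_nat_Suc of_nat_le_iff of_nat_numeral of_nat_power add.commute)
    then have "(real (m s) + 1) / 2^N \<le> 1" by simp
    moreover have "0 \<le> real (m s) / 2^N" by simp
    moreover have "lo N m $ s \<le> x$s" "x$s \<le> hi N m $ s" using x by (auto simp: mem_box_cart)
    ultimately show "0 \<le> x$s \<and> x$s \<le> 1" unfolding lo_def hi_def vec_lambda_beta by linarith
  qed
qed

lemma content_cell: "Henstock_Kurzweil_Integration.content (cbox (lo N m) (hi N m :: real^'d::finite)) = (1/2^N) ^ CARD('d)"
proof -
  have "cbox (lo N m) (hi N m :: real^'d) \<noteq> {}"
    by (auto simp: interval_ne_empty_cart lo_def hi_def divide_right_mono)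
  then have "Henstock_Kurzweil_Integration.content (cbox (lo N m) (hi N m :: real^'d)) = (\<Prod>i\<in>UNIV. hi N m $ i - lo N m $ i)"
    by (rule content_cbox_cart)
  also have "\<dots> = (\<Prod>i\<in>(UNIV::'d set). 1/2^N)"
    by (intro prod.cong refl) (simp add: lo_def hi_def diff_divide_distrib[symmetric])
  finally show ?thesis by simp
qed

lemma sum_weight_bound:
  "(\<Sum>i\<in>JJ (2^N). (1/2^N :: real) ^ card {s::'d::finite. i s \<noteq> 0}) \<le> 2 ^ CARD('d)"
proof -
  define wt where "wt = (\<lambda>(s::'d) (t::nat). if t \<noteq> 0 then 1/2^N else (1::real))"
  have 1: "(1/2^N :: real) ^ card {s::'d. i s \<noteq> 0} = (\<Prod>s\<in>UNIV. wt s (i s))" for i :: "'d \<Rightarrow> nat"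
    by (simp add: wt_def prod.If_cases Int_def)
  have "(\<Sum>i\<in>JJ (2^N). (1/2^N :: real) ^ card {s::'d. i s \<noteq> 0}) =
      (\<Sum>i\<in>JJ (2^N). \<Prod>s\<in>UNIV. wt s (i s))" by (simp only: 1)
  also have "\<dots> = (\<Prod>s\<in>(UNIV::'d set). \<Sum>t<2^N. wt s t)"
    unfolding JJ_def by (rule prod_sum_PiE[symmetric]) auto
  also have "\<dots> = (\<Prod>s\<in>(UNIV::'d set). \<Sum>t<(2::nat)^N. if t \<noteq> 0 then 1/2^N else (1::real))"
    by (simp add: wt_def)
  also have "\<dots> \<le> (\<Prod>s\<in>(UNIV::'d set). 2)"
  proof (rule prod_mono)
    fix s :: 'd
    have "(\<Sum>t<(2::nat)^N. if t \<noteq> 0 then 1/2^N else (1::real)) \<le> (\<Sum>t<(2::nat)^N. 1/2^N + (if t = 0 then 1 else 0))"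
      by (intro sum_mono) auto
    also have "\<dots> = 2" by (simp add: sum.distrib)
    finally show "0 \<le> (\<Sum>t<(2::nat)^N. if t \<noteq> 0 then 1/2^N else (1::real)) \<and>
        (\<Sum>t<(2::nat)^N. if t \<noteq> 0 then 1/2^N else (1::real)) \<le> 2"
      by (auto intro: sum_nonneg)
  qed
  finally show ?thesis by simp
qed

locale smooth =
  fixes D :: "('d::finite \<Rightarrow> nat) \<Rightarrow> real^'d \<Rightarrow> real" and M :: real
  assumes cont: "\<And>\<alpha>. sum \<alpha> UNIV \<le> CARD('d) \<Longrightarrow> continuous_on unit_cube (D \<alpha>)"
    and der: "\<And>\<alpha> s x. sum \<alpha> UNIV < CARD('d) \<Longrightarrow> x \<in> unit_cube \<Longrightarrow>
          ((\<lambda>t. D \<alpha> (x + t *\<^sub>R axis s 1)) has_real_derivative D (\<alpha>(s := Suc (\<alpha> s))) x)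
            (at 0 within {t. x + t *\<^sub>R axis s 1 \<in> unit_cube})"
    and bnd: "\<And>U x. x \<in> unit_cube \<Longrightarrow> \<bar>D (ms U) x\<bar> \<le> M"
begin

lemma M_nonneg: "0 \<le> M"
proof -
  have "(0::real^'d) \<in> unit_cube" by (simp add: cube_iff)
  then show ?thesis using bnd[of 0 "{}"] by linarith
qed

lemma contD: "continuous_on unit_cube (D (ms U))"
  by (rule cont) (simp add: sum_ms card_mono)

lemma mixed_bound:
  "T \<inter> U = {} \<Longrightarrow> a \<in> unit_cube \<Longrightarrow> b \<in> unit_cube \<Longrightarrow> (\<forall>s. a$s \<le> b$s) \<Longrightarrow>
   \<bar>RRT T (D (ms U)) a b\<bar> \<le> M * (\<Prod>s\<in>T. b$s - a$s)"
proof (induction T arbitrary: U a rule: finite_induct[OF finite])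
  case 1
  then show ?case using bnd[of a U] by (simp add: RRT_def)
next
  case (2 s T)
  let ?G = "D (ms U)"
  let ?G' = "D (ms (insert s U))"
  define \<psi> where "\<psi> t = RRT T ?G (vupd a s t) b" for t
  have sU: "s \<notin> U" using 2 by auto
  have a0: "0 \<le> a$s" and b1: "b$s \<le> 1" using 2(5,6) by (auto simp: cube_iff)
  have eq: "RRT (insert s T) ?G a b = \<psi> (b$s) - \<psi> (a$s)"
    unfolding \<psi>_def using RRT_insert[OF 2(1,2)] vupd_same[of a s] by simp
  have prodT: "(\<Prod>i\<in>T. b$i - vupd a s t $ i) = (\<Prod>i\<in>T. b$i - a$i)" for t
    using 2(2) by (intro prod.cong refl) (auto simp: vupd_def)
  have vcube: "vupd a s t \<in> unit_cube" if "a$s \<le> t" "t \<le> b$s" for t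
  proof -
    have "0 \<le> a$s" "b$s \<le> 1" using 2(5,6) by (auto simp: cube_iff)
    then have "0 \<le> t" "t \<le> 1" using that by linarith+
    then show ?thesis using 2(5) by (auto simp: cube_iff vupd_def)
  qed
  have vle: "\<forall>i. vupd a s t $ i \<le> b$i" if "t \<le> b$s" for t
    using 2(7) that by (auto simp: vupd_def)
  show ?case
  proof (cases "a$s = b$s")
    case True
    then have "RRT (insert s T) ?G a b = 0" using eq by simp
    then show ?thesis using M_nonneg 2(7) by (auto intro!: mult_nonneg_nonneg prod_nonneg)
  next
    case False
    then have ab: "a$s < b$s" using 2(7) by (meson order.not_eq_order_implies_strict)
    define q where "q E t = (\<chi> i. if i \<in> E then b$i else vupd a s t $ i)" for E t
    have q_cube: "q E t \<in> unit_cube" if "a$s \<le> t" "t \<le> b$s" for E t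
      unfolding q_def by (rule mix_in_cube[OF vcube[OF that] 2(6)])
    have q_shift: "q E t = q E t0 + (t - t0) *\<^sub>R axis s 1" if "E \<in> Pow T" for E t t0
      using that 2(2) by (auto simp: q_def vec_eq_iff axis_def vupd_def)
    have \<psi>_eq: "\<psi> t = (\<Sum>E\<in>Pow T. (-1) ^ card (T - E) * ?G (q E t))" for t
      unfolding \<psi>_def RRT_def q_def ..
    have cont\<psi>: "continuous_on {a$s..b$s} \<psi>"
      unfolding \<psi>_eq
    proof (intro continuous_intros)
      fix E
      have "continuous_on {a$s..b$s} (q E)"
        unfolding q_def vupd_def
      proof (intro continuous_on_vec_lambda)
        fix i
        show "continuous_on {a$s..b$s} (\<lambda>x. if i \<in> E then b $ i else (\<chi> i. if i = s then x else a $ i) $ i)"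
          by (cases "i \<in> E"; cases "i = s") (auto intro!: continuous_intros)
      qed
      moreover have "q E ` {a$s..b$s} \<subseteq> unit_cube" using q_cube by auto
      ultimately show "continuous_on {a$s..b$s} (\<lambda>t. ?G (q E t))"
        by (rule continuous_on_compose2[OF contD])
    qed
    have der\<psi>: "(\<psi> has_real_derivative RRT T ?G' (vupd a s t0) b) (at t0)"
      if t0: "a$s < t0" "t0 < b$s" for t0
    proof -
      have dE: "((\<lambda>t. ?G (q E t)) has_real_derivative ?G' (q E t0)) (at t0)" if E: "E \<in> Pow T" for E
      proof -
        have x: "q E t0 \<in> unit_cube" using q_cube t0 by auto
        have xs: "q E t0 $ s = t0" using E 2(2) by (auto simp: q_def vupd_def)
        have "sum (ms U) UNIV < CARD('d)"
          unfolding sum_ms using sU by (intro psubset_card_mono) auto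
        from der[OF this x, of s] have
          "((\<lambda>t. ?G (q E t0 + t *\<^sub>R axis s 1)) has_real_derivative ?G' (q E t0))
            (at 0 within {t. q E t0 + t *\<^sub>R axis s 1 \<in> unit_cube})"
          by (simp add: ms_insert[OF sU])
        then have "((\<lambda>t. ?G (q E t0 + t *\<^sub>R axis s 1)) has_real_derivative ?G' (q E t0)) (at 0)"
          by (rule within_to_at[OF _ x]) (use xs t0 a0 b1 in auto)
        then have "((\<lambda>t. ?G (q E t0 + (t + - t0) *\<^sub>R axis s 1)) has_real_derivative ?G' (q E t0)) (at t0)"
          using DERIV_shift[of "\<lambda>t. ?G (q E t0 + t *\<^sub>R axis s 1)" "?G' (q E t0)" t0 "- t0"] by simp
        moreover have "(\<lambda>t. ?G (q E t0 + (t + - t0) *\<^sub>R axis s 1)) = (\<lambda>t. ?G (q E t))"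
          using q_shift[OF E] by (simp add: fun_eq_iff)
        ultimately show ?thesis by simp
      qed
      have "(\<psi> has_real_derivative (\<Sum>E\<in>Pow T. (-1) ^ card (T - E) * ?G' (q E t0))) (at t0)"
        unfolding \<psi>_eq by (intro DERIV_sum DERIV_cmult dE)
      moreover have "(\<Sum>E\<in>Pow T. (-1) ^ card (T - E) * ?G' (q E t0)) = RRT T ?G' (vupd a s t0) b"
        unfolding RRT_def q_def ..
      ultimately show ?thesis by simp
    qed
    obtain \<xi> where \<xi>: "a$s < \<xi>" "\<xi> < b$s"
      and mv: "\<psi> (b$s) - \<psi> (a$s) = RRT T ?G' (vupd a s \<xi>) b * (b$s - a$s)"
      using mvt[OF ab cont\<psi>, of "\<lambda>t h. RRT T ?G' (vupd a s t) b * h"]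
        der\<psi> unfolding has_field_derivative_def by (metis mult.commute)
    have IH: "\<bar>RRT T ?G' (vupd a s \<xi>) b\<bar> \<le> M * (\<Prod>i\<in>T. b$i - vupd a s \<xi> $ i)"
      by (rule 2(3)) (use 2(2,4,6) \<xi> vcube[of \<xi>] vle[of \<xi>] in auto)
    have "\<bar>RRT (insert s T) ?G a b\<bar> = \<bar>RRT T ?G' (vupd a s \<xi>) b\<bar> * (b$s - a$s)"
      using eq mv ab by (simp add: abs_mult)
    also have "\<dots> \<le> M * (\<Prod>i\<in>T. b$i - a$i) * (b$s - a$s)"
      using IH prodT ab by (intro mult_right_mono) auto
    also have "\<dots> = M * (\<Prod>i\<in>insert s T. b$i - a$i)"
      using 2(1,2) by simp
    finally show ?thesis .
  qed
qed


abbreviation "f0 \<equiv> D (ms {})"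

lemma integrable_cell: "m \<in> JJ (2^N) \<Longrightarrow> f0 integrable_on cbox (lo N m) (hi N m)"
  by (rule integrable_continuous) (rule continuous_on_subset[OF contD cell_sub])

definition vsh :: "nat \<Rightarrow> 'd set \<Rightarrow> real^'d" where
  "vsh N E = (\<chi> s. if s \<in> E then 1/2^N else 0)"

lemma avg_shift:
  assumes m: "m \<in> JJ (2^N)" and E: "E \<subseteq> {s. m s \<noteq> 0}"
  shows "avgc N f0 (\<lambda>s. if s \<in> E then m s - 1 else m s) =
         2 ^ (N * CARD('d)) * integral (cbox (lo N m) (hi N m)) (\<lambda>x. f0 (x - vsh N E))"
proof -
  define w where "w = (\<lambda>s. if s \<in> E then m s - 1 else m s)"
  have wJ: "w \<in> JJ (2^N)" using m by (auto simp: JJ_def PiE_iff w_def less_imp_diff_less)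
  have lo: "lo N w = lo N m + - vsh N E" and hi: "hi N w = hi N m + - vsh N E"
    using E by (auto simp: vec_eq_iff lo_def hi_def vsh_def w_def of_nat_diff diff_divide_distrib add_divide_distrib)
  have "(f0 has_integral integral (cbox (lo N w) (hi N w)) f0) (cbox (lo N m + - vsh N E) (hi N m + - vsh N E))"
    using integrable_cell[OF wJ] unfolding lo hi by (rule integrable_integral)
  then have "((f0 \<circ> (+) (- vsh N E)) has_integral integral (cbox (lo N w) (hi N w)) f0) (cbox (lo N m) (hi N m))"
    by (simp only: has_integral_shift_cbox_iff)
  then have "integral (cbox (lo N m) (hi N m)) (\<lambda>x. f0 (x - vsh N E)) = integral (cbox (lo N w) (hi N w)) f0"
    by (simp add: integral_unique o_def add.commute)
  then show ?thesis unfolding avgc_def w_def by simp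
qed

lemma integrable_shift:
  assumes m: "m \<in> JJ (2^N)" and E: "E \<subseteq> {s. m s \<noteq> 0}"
  shows "(\<lambda>x. f0 (x - vsh N E)) integrable_on cbox (lo N m) (hi N m)"
proof -
  define w where "w = (\<lambda>s. if s \<in> E then m s - 1 else m s)"
  have wJ: "w \<in> JJ (2^N)" using m by (auto simp: JJ_def PiE_iff w_def less_imp_diff_less)
  have lo: "lo N w = lo N m + - vsh N E" and hi: "hi N w = hi N m + - vsh N E"
    using E by (auto simp: vec_eq_iff lo_def hi_def vsh_def w_def of_nat_diff diff_divide_distrib add_divide_distrib)
  have "f0 integrable_on (cbox (lo N m + - vsh N E) (hi N m + - vsh N E))"
    using integrable_cell[OF wJ] unfolding lo hi .
  then have "(f0 \<circ> (+) (- vsh N E)) integrable_on cbox (lo N m) (hi N m)"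
    by (simp only: integrable_on_shift_cbox)
  then show ?thesis by (simp add: o_def add.commute)
qed

lemma Dl_bound:
  assumes i: "i \<in> JJ (2^N)"
  shows "\<bar>Dl (2^N) (avgc N f0) i\<bar> \<le> M * (1/2^N) ^ card {s. i s \<noteq> 0}"
proof -
  define S where "S = {s. i s \<noteq> 0}"
  define \<phi> where "\<phi> x = (\<Sum>E\<in>Pow S. (-1) ^ card E * f0 (x - vsh N E))" for x
  have "Dl (2^N) (avgc N f0) i = (\<Sum>E\<in>Pow S. (-1) ^ card E * avgc N f0 (\<lambda>s. if s \<in> E then i s - 1 else i s))"
    unfolding S_def by (rule Dl_expand[OF i])
  also have "\<dots> = (\<Sum>E\<in>Pow S. (-1) ^ card E * (2 ^ (N * CARD('d)) * integral (cbox (lo N i) (hi N i)) (\<lambda>x. f0 (x - vsh N E))))"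
    by (intro sum.cong refl) (use avg_shift[OF i] in \<open>auto simp: S_def\<close>)
  also have "\<dots> = 2 ^ (N * CARD('d)) * (\<Sum>E\<in>Pow S. integral (cbox (lo N i) (hi N i)) (\<lambda>x. (-1) ^ card E * f0 (x - vsh N E)))"
    by (simp add: sum_distrib_left mult_ac)
  also have "(\<Sum>E\<in>Pow S. integral (cbox (lo N i) (hi N i)) (\<lambda>x. (-1) ^ card E * f0 (x - vsh N E))) =
       integral (cbox (lo N i) (hi N i)) \<phi>"
    unfolding \<phi>_def
    by (rule integral_sum[symmetric]) (use integrable_shift[OF i] in \<open>auto simp: S_def intro!: integrable_on_cmult_left\<close>)
  finally have Dl_eq: "Dl (2^N) (avgc N f0) i = 2 ^ (N * CARD('d)) * integral (cbox (lo N i) (hi N i)) \<phi>" .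
  have \<phi>_int: "\<phi> integrable_on cbox (lo N i) (hi N i)"
    unfolding \<phi>_def using integrable_shift[OF i]
    by (intro integrable_sum) (auto simp: S_def intro!: integrable_on_cmult_left)
  have \<phi>_bound: "\<bar>\<phi> x\<bar> \<le> M * (1/2^N) ^ card S" if x: "x \<in> cbox (lo N i) (hi N i)" for x
  proof -
    have xc: "x \<in> unit_cube" using cell_sub[OF i] x by auto
    have xs: "lo N i $ s \<le> x $ s" for s using x by (auto simp: mem_box_cart)
    have \<phi>_RRT: "\<phi> x = RRT S f0 (x - vsh N S) x"
      unfolding \<phi>_def RRT_def
    proof (rule sum.reindex_bij_witness[where i="\<lambda>E. S - E" and j="\<lambda>E. S - E"])
      fix E assume "E \<in> Pow S"
      then show "S - (S - E) = E" by auto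
      show "S - E \<in> Pow S" by auto
      have "card (S - (S - E)) = card E" using \<open>E \<in> Pow S\<close> by (simp add: Diff_Diff_Int Int_absorb1)
      moreover have "(\<chi> s. if s \<in> S - E then x $ s else (x - vsh N S) $ s) = x - vsh N E"
        using \<open>E \<in> Pow S\<close> by (auto simp: vec_eq_iff vsh_def)
      ultimately show "(-1) ^ card (S - (S - E)) * f0 (\<chi> s. if s \<in> S - E then x $ s else (x - vsh N S) $ s) =
          (-1) ^ card E * f0 (x - vsh N E)" by simp
    qed auto
    have ac: "x - vsh N S \<in> unit_cube"
      unfolding cube_iff
    proof
      fix s
      show "0 \<le> (x - vsh N S) $ s \<and> (x - vsh N S) $ s \<le> 1"
      proof (cases "s \<in> S")
        case True
        then have "1 \<le> real (i s)" by (auto simp: S_def)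
        then have "1/2^N \<le> real (i s) / 2^N" by (simp add: divide_right_mono)
        then have "1/2^N \<le> x $ s" using xs[of s] by (simp add: lo_def)
        moreover have "x $ s \<le> 1" using xc by (auto simp: cube_iff)
        moreover have "0 < 1/(2::real)^N" by simp
        ultimately have "0 \<le> x $ s - 1/2^N" "x $ s - 1/2^N \<le> 1" by linarith+
        then show ?thesis using True by (auto simp: vsh_def)
      next
        case False
        then show ?thesis using xc by (auto simp: vsh_def cube_iff)
      qed
    qed
    have "\<bar>RRT S f0 (x - vsh N S) x\<bar> \<le> M * (\<Prod>s\<in>S. x $ s - (x - vsh N S) $ s)"
      by (rule mixed_bound) (use ac xc in \<open>auto simp: vsh_def\<close>)
    also have "(\<Prod>s\<in>S. x $ s - (x - vsh N S) $ s) = (1/2^N) ^ card S"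
      by (simp add: vsh_def)
    finally show ?thesis using \<phi>_RRT by simp
  qed
  have "\<bar>integral (cbox (lo N i) (hi N i)) \<phi>\<bar> \<le> M * (1/2^N) ^ card S * Henstock_Kurzweil_Integration.content (cbox (lo N i) (hi N i))"
    using has_integral_bound[OF _ integrable_integral[OF \<phi>_int], of "M * (1/2^N) ^ card S"] \<phi>_bound M_nonneg
    by simp
  then have "\<bar>integral (cbox (lo N i) (hi N i)) \<phi>\<bar> \<le> M * (1/2^N) ^ card S * (1/2^N) ^ CARD('d)"
    by (simp only: content_cell)
  then have "2 ^ (N * CARD('d)) * \<bar>integral (cbox (lo N i) (hi N i)) \<phi>\<bar> \<le> M * (1/2^N) ^ card S"
    by (simp add: power_mult field_simps power_divide)
  then show ?thesis unfolding Dl_eq S_def by (simp add: abs_mult)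
qed


lemma cube_nonempty: "(0::real^'d) \<in> unit_cube" by (simp add: cube_iff)

lemma Phi_bound:
  assumes y: "y \<in> unit_cube" and B: "\<And>x. x \<in> unit_cube \<Longrightarrow> \<bar>F x\<bar> \<le> B"
  shows "\<bar>Phi F f0 N y\<bar> \<le> (2 ^ CARD('d) * M) * (2 ^ CARD('d) * B)"
proof -
  have B0: "0 \<le> B" using B[OF cube_nonempty] by linarith
  have "\<bar>Phi F f0 N y\<bar> \<le> (\<Sum>i\<in>JJ (2^N). \<bar>Dl (2^N) (avgc N f0) i * RR F (pt N y i) y\<bar>)"
    unfolding Phi_sbp[OF y] by (rule sum_abs)
  also have "\<dots> \<le> (\<Sum>i\<in>JJ (2^N). (M * (1/2^N) ^ card {s::'d. i s \<noteq> 0}) * (2 ^ CARD('d) * B))"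
  proof (rule sum_mono)
    fix i :: "'d \<Rightarrow> nat" assume i: "i \<in> JJ (2^N)"
    have 1: "\<bar>Dl (2^N) (avgc N f0) i\<bar> \<le> M * (1/2^N) ^ card {s::'d. i s \<noteq> 0}" by (rule Dl_bound[OF i])
    have 2: "\<bar>RR F (pt N y i) y\<bar> \<le> 2 ^ CARD('d) * B" by (rule RR_bound[OF B pt_in_cube[OF y] y])
    show "\<bar>Dl (2^N) (avgc N f0) i * RR F (pt N y i) y\<bar> \<le> M * (1/2^N) ^ card {s::'d. i s \<noteq> 0} * (2 ^ CARD('d) * B)"
      unfolding abs_mult by (rule mult_mono[OF 1 2]) (use M_nonneg in auto)
  qed
  also have "\<dots> = (M * (2 ^ CARD('d) * B)) * (\<Sum>i\<in>JJ (2^N). (1/2^N :: real) ^ card {s::'d. i s \<noteq> 0})"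
    by (simp add: sum_distrib_left sum_distrib_right mult_ac)
  also have "\<dots> \<le> (M * (2 ^ CARD('d) * B)) * 2 ^ CARD('d)"
    by (intro mult_left_mono sum_weight_bound) (use M_nonneg B0 in auto)
  finally show ?thesis by (simp add: mult_ac)
qed

lemma avg_close:
  assumes m: "m \<in> JJ (2^K)" and close: "\<And>x. x \<in> cbox (lo K m) (hi K m) \<Longrightarrow> \<bar>f0 x - c\<bar> \<le> \<eta>"
  shows "\<bar>avgc K f0 m - c\<bar> \<le> \<eta>"
proof -
  let ?C = "cbox (lo K m) (hi K m)"
  have \<eta>0: "0 \<le> \<eta>" using close[of "lo K m"] by (auto simp: mem_box_cart lo_def hi_def divide_right_mono) 
  have ct: "Henstock_Kurzweil_Integration.content ?C = (1/2^K) ^ CARD('d)" by (rule content_cell)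
  have int: "((\<lambda>x. f0 x - c) has_integral (integral ?C f0 - (1/2^K) ^ CARD('d) * c)) ?C"
    using has_integral_diff[OF integrable_integral[OF integrable_cell[OF m]] has_integral_const[of c "lo K m" "hi K m"]]
    unfolding ct by simp
  have "\<bar>integral ?C f0 - (1/2^K) ^ CARD('d) * c\<bar> \<le> \<eta> * (1/2^K) ^ CARD('d)"
    using has_integral_bound[OF \<eta>0 int] close unfolding ct by simp
  then have "2 ^ (K * CARD('d)) * \<bar>integral ?C f0 - (1/2^K) ^ CARD('d) * c\<bar> \<le> \<eta>"
    by (simp add: power_mult field_simps power_divide)
  moreover have "2 ^ (K * CARD('d)) * (integral ?C f0 - (1/2^K) ^ CARD('d) * c) = avgc K f0 m - c"
    unfolding avgc_def by (simp add: power_mult field_simps power_divide)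
  ultimately have "\<bar>avgc K f0 m - c\<bar> = 2 ^ (K * CARD('d)) * \<bar>integral ?C f0 - (1/2^K) ^ CARD('d) * c\<bar>"
    by (metis abs_mult abs_of_nonneg zero_le_numeral zero_le_power)
  then show ?thesis using \<open>2 ^ (K * CARD('d)) * \<bar>integral ?C f0 - (1/2^K) ^ CARD('d) * c\<bar> \<le> \<eta>\<close> by simp
qed

end

definition LV :: "(real^'d::finite \<Rightarrow> real) \<Rightarrow> real \<Rightarrow> bool" where
  "LV F L \<longleftrightarrow> (\<forall>a b. a \<in> unit_cube \<longrightarrow> b \<in> unit_cube \<longrightarrow> (\<forall>s. a$s \<le> b$s) \<longrightarrow>
      \<bar>RR F a b\<bar> \<le> L * (\<Prod>s\<in>UNIV. b$s - a$s))"

lemma min_step: "a \<le> b \<Longrightarrow> min a y \<le> min b y \<and> min b y - min a y \<le> b - (a::real)"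
  by (auto simp: min_def)

lemma pt_step: "pt k y j $ s \<le> pt k y (\<lambda>s. Suc (j s)) $ s \<and> pt k y (\<lambda>s. Suc (j s)) $ s - pt k y j $ s \<le> 1/2^k"
proof -
  have "real (j s) / 2^k \<le> real (Suc (j s)) / 2^k" by (simp add: divide_right_mono)
  moreover have "real (Suc (j s)) / 2^k - real (j s) / 2^k = 1/2^k" by (simp add: diff_divide_distrib[symmetric])
  ultimately show ?thesis using min_step[of "real (j s) / 2^k" "real (Suc (j s)) / 2^k" "y$s"]
    by (simp add: pt_def)
qed

lemma card_JJ: "card (JJ n :: ('d::finite \<Rightarrow> nat) set) = n ^ CARD('d)"
  by (simp add: JJ_def card_PiE)

context smooth
begin


lemma div_cell_bounds:
  fixes j N l :: nat
  shows "real (j div 2^l) / 2^N \<le> real j / 2^(N+l)" "(real j + 1) / 2^(N+l) \<le> (real (j div 2^l) + 1) / 2^N"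
proof -
  have a: "(j div 2^l) * 2^l \<le> j" by simp
  have b: "j + 1 \<le> (j div 2^l + 1) * 2^l"
    using dividend_less_div_times[of "2^l" j] by simp
  have "real (j div 2^l) * 2^l \<le> real j" using a of_nat_le_iff[of "(j div 2^l) * 2^l" j] by simp
  then have "real (j div 2^l) \<le> real j / 2^l" by (simp add: le_divide_eq)
  then have "real (j div 2^l) / 2^N \<le> (real j / 2^l) / 2^N" by (rule divide_right_mono) simp
  then show "real (j div 2^l) / 2^N \<le> real j / 2^(N+l)"
    by (simp add: power_add mult.commute)
  have "real (j + 1) \<le> real ((j div 2^l + 1) * 2^l)" using b by (simp only: of_nat_le_iff)
  then have "real j + 1 \<le> (real (j div 2^l) + 1) * 2^l" by (simp add: algebra_simps)
  then have "(real j + 1) / 2^l \<le> real (j div 2^l) + 1" by (simp add: divide_le_eq)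
  then have "((real j + 1) / 2^l) / 2^N \<le> (real (j div 2^l) + 1) / 2^N" by (rule divide_right_mono) simp
  then show "(real j + 1) / 2^(N+l) \<le> (real (j div 2^l) + 1) / 2^N"
    by (simp add: power_add mult.commute)
qed

lemma Phi_LV_step:
  assumes LV: "LV F L" and L0: "0 \<le> L" and y: "y \<in> unit_cube"
    and close: "\<And>x x'. x \<in> unit_cube \<Longrightarrow> x' \<in> unit_cube \<Longrightarrow> (\<forall>s. \<bar>x$s - x'$s\<bar> \<le> 1/2^N) \<Longrightarrow> \<bar>f0 x - f0 x'\<bar> \<le> \<eta>"
  shows "\<bar>Phi F f0 (N+l) y - Phi F f0 N y\<bar> \<le> 2 * \<eta> * L"
proof -
  let ?K = "N + l"
  let ?R = "\<lambda>j. RR F (pt ?K y j) (pt ?K y (\<lambda>s. Suc (j s)))"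
  have "Phi F f0 (N+l) y - Phi F f0 N y = (\<Sum>j\<in>JJ (2^?K). (avgc ?K f0 j - avgc N f0 (\<lambda>s. j s div 2^l)) * ?R j)"
    unfolding Phi_refine[OF y, of F f0 N l] unfolding Phi_def by (simp add: left_diff_distrib sum_subtractf)
  also have "\<bar>\<dots>\<bar> \<le> (\<Sum>j\<in>(JJ (2^?K) :: ('d \<Rightarrow> nat) set). (2 * \<eta>) * (L * (1/2^?K) ^ CARD('d)))"
  proof (rule order_trans[OF sum_abs], rule sum_mono)
    fix j :: "'d \<Rightarrow> nat" assume j: "j \<in> JJ (2^?K)"
    define m where "m = (\<lambda>s. j s div 2^l)"
    have m: "m \<in> JJ (2^N)"
      using j by (auto simp: JJ_def PiE_iff m_def power_add less_mult_imp_div_less)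
    define p where "p = lo N m"
    have pc: "p \<in> unit_cube" using cell_sub[OF m] by (auto simp: p_def mem_box_cart lo_def hi_def divide_right_mono)
    have 1: "\<bar>avgc ?K f0 j - f0 p\<bar> \<le> \<eta>"
    proof (rule avg_close[OF j])
      fix x assume x: "x \<in> cbox (lo ?K j) (hi ?K j)"
      have xc: "x \<in> unit_cube" using cell_sub[OF j] x by auto
      have "\<bar>x$s - p$s\<bar> \<le> 1/2^N" for s
      proof -
        have "lo ?K j $ s \<le> x $ s" "x $ s \<le> hi ?K j $ s" using x by (auto simp: mem_box_cart)
        then show ?thesis using div_cell_bounds[where j="j s" and N=N and l=l]
          by (simp add: lo_def hi_def p_def m_def add_divide_distrib abs_le_iff)
      qed
      then show "\<bar>f0 x - f0 p\<bar> \<le> \<eta>" using close[OF xc pc] by blast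
    qed
    have 2: "\<bar>avgc N f0 m - f0 p\<bar> \<le> \<eta>"
    proof (rule avg_close[OF m])
      fix x assume x: "x \<in> cbox (lo N m) (hi N m)"
      have xc: "x \<in> unit_cube" using cell_sub[OF m] x by auto
      have "\<bar>x$s - p$s\<bar> \<le> 1/2^N" for s
      proof -
        have "lo N m $ s \<le> x $ s" "x $ s \<le> hi N m $ s" using x by (auto simp: mem_box_cart)
        then show ?thesis by (simp add: lo_def hi_def p_def add_divide_distrib abs_le_iff)
      qed
      then show "\<bar>f0 x - f0 p\<bar> \<le> \<eta>" using close[OF xc pc] by blast
    qed
    have A: "\<bar>avgc ?K f0 j - avgc N f0 m\<bar> \<le> 2 * \<eta>" using 1 2 by linarith
    have "\<bar>?R j\<bar> \<le> L * (\<Prod>s\<in>UNIV. pt ?K y (\<lambda>s. Suc (j s)) $ s - pt ?K y j $ s)"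
      using LV pt_in_cube[OF y] pt_step unfolding LV_def by blast
    also have "\<dots> \<le> L * (\<Prod>s\<in>(UNIV::'d set). 1/2^?K)"
      by (intro mult_left_mono prod_mono L0) (use pt_step in auto)
    finally have B: "\<bar>?R j\<bar> \<le> L * (1/2^?K) ^ CARD('d)" by simp
    show "\<bar>(avgc ?K f0 j - avgc N f0 (\<lambda>s. j s div 2^l)) * ?R j\<bar> \<le> (2 * \<eta>) * (L * (1/2^?K) ^ CARD('d))"
      unfolding abs_mult m_def[symmetric] by (rule mult_mono[OF A B]) (use 1 in auto)
  qed
  also have "\<dots> = 2 * \<eta> * L * (real (2^?K) ^ CARD('d) * (1/2^?K) ^ CARD('d))"
    by (simp add: card_JJ)
  also have "real (2^?K) ^ CARD('d) * (1/2^?K :: real) ^ CARD('d) = 1"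
    by (simp add: power_one_over[symmetric] power_mult_distrib[symmetric])
  finally show ?thesis by simp
qed

end


section \<open>Density of functions of bounded mixed variation\<close>

definition Lip01 :: "(real \<Rightarrow> real) \<Rightarrow> bool" where
  "Lip01 \<phi> \<longleftrightarrow> (\<exists>C\<ge>0. \<forall>u\<in>{0..1}. \<forall>v\<in>{0..1}. \<bar>\<phi> u - \<phi> v\<bar> \<le> C * \<bar>u - v\<bar>)"

inductive PS :: "(real^'d::finite \<Rightarrow> real) \<Rightarrow> bool" where
  gen: "(\<And>s. Lip01 (\<phi> s)) \<Longrightarrow> PS (\<lambda>x. \<Prod>s\<in>UNIV. \<phi> s (x$s))"
| add: "PS F \<Longrightarrow> PS G \<Longrightarrow> PS (\<lambda>x. F x + G x)"
| scal: "PS F \<Longrightarrow> PS (\<lambda>x. c * F x)"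

lemma Lip01_mult:
  assumes "Lip01 \<phi>" "Lip01 \<psi>"
  shows "Lip01 (\<lambda>u. \<phi> u * \<psi> u)"
proof -
  obtain C1 where C1: "C1 \<ge> 0" "\<And>u v. u \<in> {0..1} \<Longrightarrow> v \<in> {0..1} \<Longrightarrow> \<bar>\<phi> u - \<phi> v\<bar> \<le> C1 * \<bar>u - v\<bar>"
    using assms(1) unfolding Lip01_def by blast
  obtain C2 where C2: "C2 \<ge> 0" "\<And>u v. u \<in> {0..1} \<Longrightarrow> v \<in> {0..1} \<Longrightarrow> \<bar>\<psi> u - \<psi> v\<bar> \<le> C2 * \<bar>u - v\<bar>"
    using assms(2) unfolding Lip01_def by blast
  define B1 where "B1 = \<bar>\<phi> 0\<bar> + C1"
  define B2 where "B2 = \<bar>\<psi> 0\<bar> + C2"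
  have b1: "\<bar>\<phi> u\<bar> \<le> B1" if "u \<in> {0..1}" for u
  proof -
    have "\<bar>\<phi> u - \<phi> 0\<bar> \<le> C1 * \<bar>u - 0\<bar>" using C1(2)[of u 0] that by simp
    moreover have "C1 * \<bar>u\<bar> \<le> C1" using that C1(1) by (simp add: mult_left_le)
    moreover have "\<bar>\<phi> u\<bar> \<le> \<bar>\<phi> u - \<phi> 0\<bar> + \<bar>\<phi> 0\<bar>" using abs_triangle_ineq[of "\<phi> u - \<phi> 0" "\<phi> 0"] by simp
    ultimately show ?thesis unfolding B1_def by simp
  qed
  have b2: "\<bar>\<psi> u\<bar> \<le> B2" if "u \<in> {0..1}" for u
  proof -
    have "\<bar>\<psi> u - \<psi> 0\<bar> \<le> C2 * \<bar>u - 0\<bar>" using C2(2)[of u 0] that by simp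
    moreover have "C2 * \<bar>u\<bar> \<le> C2" using that C2(1) by (simp add: mult_left_le)
    moreover have "\<bar>\<psi> u\<bar> \<le> \<bar>\<psi> u - \<psi> 0\<bar> + \<bar>\<psi> 0\<bar>" using abs_triangle_ineq[of "\<psi> u - \<psi> 0" "\<psi> 0"] by simp
    ultimately show ?thesis unfolding B2_def by simp
  qed
  show ?thesis unfolding Lip01_def
  proof (intro exI[of _ "B1 * C2 + B2 * C1"] conjI ballI)
    show "0 \<le> B1 * C2 + B2 * C1" using C1 C2 unfolding B1_def B2_def by simp
    fix u v :: real assume u: "u \<in> {0..1}" and v: "v \<in> {0..1}"
    have "\<phi> u * \<psi> u - \<phi> v * \<psi> v = \<phi> u * (\<psi> u - \<psi> v) + \<psi> v * (\<phi> u - \<phi> v)" by (simp add: algebra_simps)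
    then have "\<bar>\<phi> u * \<psi> u - \<phi> v * \<psi> v\<bar> \<le> \<bar>\<phi> u\<bar> * \<bar>\<psi> u - \<psi> v\<bar> + \<bar>\<psi> v\<bar> * \<bar>\<phi> u - \<phi> v\<bar>"
      by (metis abs_mult abs_triangle_ineq)
    also have "\<dots> \<le> B1 * (C2 * \<bar>u - v\<bar>) + B2 * (C1 * \<bar>u - v\<bar>)"
      by (intro add_mono mult_mono b1 b2 C1 C2 u v) (use b1[OF u] b2[OF v] in auto)
    finally show "\<bar>\<phi> u * \<psi> u - \<phi> v * \<psi> v\<bar> \<le> (B1 * C2 + B2 * C1) * \<bar>u - v\<bar>" by (simp add: algebra_simps)
  qed
qed

lemma PS_mult_gen:
  assumes "PS G" "\<And>s. Lip01 (\<phi> s)"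
  shows "PS (\<lambda>x. (\<Prod>s\<in>UNIV. \<phi> s (x$s)) * G x)"
  using assms(1)
proof induction
  case (gen \<psi>)
  have "PS (\<lambda>x. \<Prod>s\<in>UNIV. (\<lambda>s u. \<phi> s u * \<psi> s u) s (x$s))"
    by (rule PS.gen) (use Lip01_mult assms(2) gen in auto)
  then show ?case by (simp add: prod.distrib)
next
  case (add G1 G2)
  then show ?case using PS.add[OF add(3,4)] by (simp add: distrib_left)
next
  case (scal G c)
  then show ?case using PS.scal[OF scal(2), of c] by (simp add: mult_ac)
qed

lemma PS_mult:
  assumes "PS F" "PS G"
  shows "PS (\<lambda>x. F x * G x)"
  using assms(1)
proof induction
  case (gen \<phi>)
  then show ?case by (rule PS_mult_gen[OF assms(2)])
next
  case (add F1 F2)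
  then show ?case using PS.add[OF add(3,4)] by (simp add: distrib_right)
next
  case (scal F c)
  then show ?case using PS.scal[OF scal(2), of c] by (simp add: mult_ac)
qed

lemma Lip01_const: "Lip01 (\<lambda>_. c)" by (auto simp: Lip01_def)
lemma Lip01_id: "Lip01 (\<lambda>u. u)" by (auto simp: Lip01_def intro!: exI[of _ 1])

lemma PS_const: "PS (\<lambda>x::real^'d::finite. c)"
  using PS.scal[OF PS.gen[of "\<lambda>_ _. 1"], of c] by (simp add: Lip01_const)

lemma PS_coord: "PS (\<lambda>x::real^'d::finite. x$i)"
proof -
  have "PS (\<lambda>x::real^'d. \<Prod>s\<in>UNIV. (\<lambda>s u. if s = i then u else 1) s (x$s))"
  proof (rule PS.gen)
    fix s show "Lip01 ((\<lambda>s u. if s = i then u else 1) s)"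
      by (cases "s = i") (simp_all add: Lip01_const Lip01_id)
  qed
  moreover have "(\<Prod>s\<in>UNIV. (\<lambda>s u. if s = i then u else 1) s (x$s)) = x$i" for x :: "real^'d"
    by (simp add: prod.delta')
  ultimately show ?thesis by simp
qed

lemma RR_prod: "RR (\<lambda>x. \<Prod>s\<in>UNIV. \<phi> s (x$s)) a b = (\<Prod>s\<in>UNIV. \<phi> s (b$s) - \<phi> s (a$s))"
proof -
  have "(\<Prod>s\<in>UNIV. \<phi> s (b$s) + - \<phi> s (a$s)) =
      (\<Sum>E\<in>Pow UNIV. (\<Prod>s\<in>E. \<phi> s (b$s)) * (\<Prod>s\<in>UNIV - E. - \<phi> s (a$s)))"
    by (rule prod_add) simp
  also have "\<dots> = RR (\<lambda>x. \<Prod>s\<in>UNIV. \<phi> s (x$s)) a b"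
    unfolding RRT_def
  proof (rule sum.cong[OF refl])
    fix E :: "'a set"
    have "(\<Prod>s\<in>UNIV - E. - \<phi> s (a$s)) = (\<Prod>s\<in>UNIV - E. (-1) * \<phi> s (a$s))" by simp
    also have "\<dots> = (-1) ^ card (UNIV - E) * (\<Prod>s\<in>UNIV - E. \<phi> s (a$s))"
      by (simp only: prod.distrib prod_constant)
    finally have 1: "(\<Prod>s\<in>UNIV - E. - \<phi> s (a$s)) = (-1) ^ card (UNIV - E) * (\<Prod>s\<in>UNIV - E. \<phi> s (a$s))" .
    have 2: "(\<Prod>s\<in>UNIV. \<phi> s ((\<chi> s. if s \<in> E then b$s else a$s) $ s)) =
        (\<Prod>s\<in>E. \<phi> s (b$s)) * (\<Prod>s\<in>UNIV - E. \<phi> s (a$s))"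
    proof -
      have "(\<Prod>s\<in>UNIV. \<phi> s ((\<chi> s. if s \<in> E then b$s else a$s) $ s)) =
          (\<Prod>s\<in>UNIV. if s \<in> E then \<phi> s (b$s) else \<phi> s (a$s))"
        by (intro prod.cong refl) auto
      also have "\<dots> = (\<Prod>s\<in>UNIV \<inter> {s. s \<in> E}. \<phi> s (b$s)) * (\<Prod>s\<in>UNIV \<inter> - {s. s \<in> E}. \<phi> s (a$s))"
        by (rule prod.If_cases) simp
      also have "\<dots> = (\<Prod>s\<in>E. \<phi> s (b$s)) * (\<Prod>s\<in>UNIV - E. \<phi> s (a$s))"
      proof -
        have e1: "UNIV \<inter> {s. s \<in> E} = E" and e2: "UNIV \<inter> - {s. s \<in> E} = UNIV - E" by auto
        show ?thesis by (simp only: e1 e2)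
      qed
      finally show ?thesis .
    qed
    show "(\<Prod>s\<in>E. \<phi> s (b$s)) * (\<Prod>s\<in>UNIV - E. - \<phi> s (a$s)) =
        (-1) ^ card (UNIV - E) * (\<Prod>s\<in>UNIV. \<phi> s ((\<chi> s. if s \<in> E then b$s else a$s) $ s))"
      unfolding 1 2 by (simp add: mult_ac)
  qed
  finally show ?thesis by simp
qed

lemma RR_add: "RR (\<lambda>x. F x + G x) a b = RR F a b + RR G a b"
  unfolding RRT_def by (simp add: distrib_left sum.distrib)

lemma RR_scal: "RR (\<lambda>x. c * F x) a b = c * RR F a b"
  unfolding RRT_def by (simp add: sum_distrib_left mult_ac)

lemma PS_LV: "PS F \<Longrightarrow> \<exists>L\<ge>0. LV F L"
proof (induction rule: PS.induct)
  case (gen \<phi>)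
  then have "\<forall>s. \<exists>C\<ge>0. \<forall>u\<in>{0..1}. \<forall>v\<in>{0..1}. \<bar>\<phi> s u - \<phi> s v\<bar> \<le> C * \<bar>u - v\<bar>"
    unfolding Lip01_def by blast
  then obtain C where C: "\<And>s. C s \<ge> 0" "\<And>s u v. u \<in> {0..1} \<Longrightarrow> v \<in> {0..1} \<Longrightarrow> \<bar>\<phi> s u - \<phi> s v\<bar> \<le> C s * \<bar>u - v\<bar>"
    by metis
  show ?case
  proof (intro exI[of _ "\<Prod>s\<in>UNIV. C s"] conjI)
    show "0 \<le> (\<Prod>s\<in>UNIV. C s)" using C(1) by (simp add: prod_nonneg)
    show "LV (\<lambda>x. \<Prod>s\<in>UNIV. \<phi> s (x $ s)) (\<Prod>s\<in>UNIV. C s)"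
      unfolding LV_def
    proof (intro allI impI)
      fix a b :: "real^'a" assume a: "a \<in> unit_cube" and b: "b \<in> unit_cube" and ab: "\<forall>s. a$s \<le> b$s"
      have "\<bar>RR (\<lambda>x. \<Prod>s\<in>UNIV. \<phi> s (x $ s)) a b\<bar> = (\<Prod>s\<in>UNIV. \<bar>\<phi> s (b$s) - \<phi> s (a$s)\<bar>)"
        by (simp add: RR_prod abs_prod)
      also have "\<dots> \<le> (\<Prod>s\<in>UNIV. C s * (b$s - a$s))"
      proof (rule prod_mono)
        fix s
        have "a$s \<in> {0..1}" "b$s \<in> {0..1}" using a b by (auto simp: cube_iff)
        then show "0 \<le> \<bar>\<phi> s (b$s) - \<phi> s (a$s)\<bar> \<and> \<bar>\<phi> s (b$s) - \<phi> s (a$s)\<bar> \<le> C s * (b$s - a$s)"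
          using C(2)[of "b$s" "a$s" s] ab by auto
      qed
      also have "\<dots> = (\<Prod>s\<in>UNIV. C s) * (\<Prod>s\<in>UNIV. b$s - a$s)" by (simp add: prod.distrib)
      finally show "\<bar>RR (\<lambda>x. \<Prod>s\<in>UNIV. \<phi> s (x $ s)) a b\<bar> \<le> (\<Prod>s\<in>UNIV. C s) * (\<Prod>s\<in>UNIV. b$s - a$s)" .
    qed
  qed
next
  case (add F G)
  then obtain L1 L2 where L: "L1 \<ge> 0" "LV F L1" "L2 \<ge> 0" "LV G L2" by blast
  show ?case
  proof (intro exI[of _ "L1 + L2"] conjI)
    show "0 \<le> L1 + L2" using L by simp
    show "LV (\<lambda>x. F x + G x) (L1 + L2)" unfolding LV_def
    proof (intro allI impI)
      fix a b :: "real^'a" assume a: "a \<in> unit_cube" and b: "b \<in> unit_cube" and ab: "\<forall>s. a$s \<le> b$s"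
      have "\<bar>RR F a b\<bar> \<le> L1 * (\<Prod>s\<in>UNIV. b$s - a$s)" "\<bar>RR G a b\<bar> \<le> L2 * (\<Prod>s\<in>UNIV. b$s - a$s)"
        using L a b ab unfolding LV_def by blast+
      then show "\<bar>RR (\<lambda>x. F x + G x) a b\<bar> \<le> (L1 + L2) * (\<Prod>s\<in>UNIV. b$s - a$s)"
        unfolding RR_add by (simp add: distrib_right)
    qed
  qed
next
  case (scal F c)
  then obtain L where L: "L \<ge> 0" "LV F L" by blast
  show ?case
  proof (intro exI[of _ "\<bar>c\<bar> * L"] conjI)
    show "0 \<le> \<bar>c\<bar> * L" using L by simp
    show "LV (\<lambda>x. c * F x) (\<bar>c\<bar> * L)" unfolding LV_def
    proof (intro allI impI)
      fix a b :: "real^'a" assume a: "a \<in> unit_cube" and b: "b \<in> unit_cube" and ab: "\<forall>s. a$s \<le> b$s"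
      have "\<bar>RR F a b\<bar> \<le> L * (\<Prod>s\<in>UNIV. b$s - a$s)" using L a b ab unfolding LV_def by blast
      then show "\<bar>RR (\<lambda>x. c * F x) a b\<bar> \<le> (\<bar>c\<bar> * L) * (\<Prod>s\<in>UNIV. b$s - a$s)"
        unfolding RR_scal abs_mult mult.assoc by (rule mult_left_mono) simp
    qed
  qed
qed

lemma density:
  fixes F :: "real^'d::finite \<Rightarrow> real"
  assumes "continuous_on unit_cube F" "0 < \<delta>"
  obtains F' L where "0 \<le> L" "LV F' L" "\<And>x. x \<in> unit_cube \<Longrightarrow> \<bar>F x - F' x\<bar> \<le> \<delta>"
proof -
  interpret R: function_ring_on "{F. PS F \<and> continuous_on unit_cube F}" "unit_cube :: (real^'d) set"
  proof unfold_locales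
    show "compact (unit_cube :: (real^'d) set)" by (simp add: unit_cube_def)
  next
    fix f g :: "real^'d \<Rightarrow> real"
    assume "f \<in> {F. PS F \<and> continuous_on unit_cube F}" "g \<in> {F. PS F \<and> continuous_on unit_cube F}"
    then show "(\<lambda>x. f x + g x) \<in> {F. PS F \<and> continuous_on unit_cube F}"
      "(\<lambda>x. f x * g x) \<in> {F. PS F \<and> continuous_on unit_cube F}"
      by (auto intro!: PS.add PS_mult continuous_intros)
  next
    fix c :: real
    show "(\<lambda>_. c) \<in> {F. PS F \<and> continuous_on unit_cube F}" by (simp add: PS_const)
  next
    fix x y :: "real^'d" assume "x \<noteq> y"
    then obtain i where "x$i \<noteq> y$i" by (auto simp: vec_eq_iff)
    then show "\<exists>f\<in>{F. PS F \<and> continuous_on unit_cube F}. f x \<noteq> f y"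
      by (intro bexI[of _ "\<lambda>x. x$i"]) (auto simp: PS_coord intro!: continuous_intros)
  qed auto
  obtain g where g: "g \<in> {F. PS F \<and> continuous_on unit_cube F}" "\<forall>x\<in>unit_cube. \<bar>F x - g x\<bar> < \<delta>"
    using R.Stone_Weierstrass_basic[OF assms] by blast
  obtain L where "L \<ge> 0" "LV g L" using PS_LV g(1) by blast
  then show ?thesis using that g(2) by (meson less_imp_le)
qed


section \<open>Haar functions\<close>

definition nd :: "nat \<Rightarrow> real \<Rightarrow> bool" where
  "nd N t \<longleftrightarrow> (\<forall>q::int. 2^N * t \<noteq> of_int q)"

lemma haar_lev_eq:
  assumes "1 \<le> i" "i \<le> 2^L"
  shows "haar_lev (2^L + i) = L"
  unfolding haar_lev_def
proof (rule the_equality)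
  show "2 ^ L < 2 ^ L + i \<and> 2 ^ L + i \<le> 2 ^ Suc L" using assms by simp
next
  fix j assume j: "2 ^ j < 2 ^ L + i \<and> 2 ^ L + i \<le> (2::nat) ^ Suc j"
  show "j = L"
  proof (rule ccontr)
    assume "j \<noteq> L"
    then consider "j < L" | "L < j" by linarith
    then show False
    proof cases
      case 1
      then have "(2::nat) ^ Suc j \<le> 2 ^ L" by (intro power_increasing) auto
      then show False using j assms by simp
    next
      case 2
      then have "(2::nat) ^ Suc L \<le> 2 ^ j" by (intro power_increasing) auto
      then show False using j assms by simp
    qed
  qed
qed

lemma haar_pos_eq: "1 \<le> i \<Longrightarrow> i \<le> 2^L \<Longrightarrow> haar_pos (2^L + i) = i"
  by (simp add: haar_pos_def haar_lev_eq)

lemma haar_one: "haar 1 t = 1"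
  by (simp add: haar_def)

lemma haar_Suc0: "haar (Suc 0) t = 1"
  by (simp add: haar_def)

lemma haar_formula:
  assumes i: "1 \<le> i" "i \<le> 2^L" and nd: "nd (Suc L) t"
  shows "haar (2^L + i) t = 2 powr (real L / 2) *
     (if \<lfloor>2^Suc L * t\<rfloor> = 2 * int i - 2 then 1 else if \<lfloor>2^Suc L * t\<rfloor> = 2 * int i - 1 then -1 else 0)"
proof -
  define P :: real where "P = 2^Suc L"
  define T where "T = P * t"
  have P0: "0 < P" by (simp add: P_def)
  have n1: "2^L + i \<noteq> 1" using i by (metis add_le_same_cancel2 le_zero_eq not_one_le_zero one_le_power two_realpow_ge_one nat_less_le not_less_eq_eq zero_less_power pos2 power_eq_0_iff)
  have Tne: "T \<noteq> of_int q" for q using nd unfolding nd_def T_def P_def by simp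
  have e1: "(real i - 1) / 2^L = (2 * real i - 2) / P" by (simp add: P_def field_simps)
  have e2: "(2 * real i - 1) / 2^Suc L = (2 * real i - 1) / P" by (simp add: P_def)
  have e3: "real i / 2^L = (2 * real i) / P" by (simp add: P_def field_simps)
  have lt1: "c / P < t \<longleftrightarrow> c < T" for c using P0 by (simp add: T_def divide_less_eq mult.commute)
  have lt2: "t < c / P \<longleftrightarrow> T < c" for c using P0 by (simp add: T_def less_divide_eq mult.commute)
  have eq: "t = c / P \<longleftrightarrow> T = c" for c using P0 by (auto simp: T_def field_simps)
  have ne1: "T \<noteq> 2 * real i - 2" using Tne[of "2 * int i - 2"] by simp
  have ne2: "T \<noteq> 2 * real i - 1" using Tne[of "2 * int i - 1"] by simp
  have ne3: "T \<noteq> 2 * real i" using Tne[of "2 * int i"] by simp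
  have f1: "\<lfloor>T\<rfloor> = 2 * int i - 2 \<longleftrightarrow> 2 * real i - 2 < T \<and> T < 2 * real i - 1"
    using ne1 by (auto simp: floor_eq_iff)
  have f2: "\<lfloor>T\<rfloor> = 2 * int i - 1 \<longleftrightarrow> 2 * real i - 1 < T \<and> T < 2 * real i"
    using ne2 by (auto simp: floor_eq_iff)
  show ?thesis
    unfolding haar_def Let_def haar_lev_eq[OF i] haar_pos_eq[OF i] e1 e2 e3 lt1 lt2 eq
    using n1 ne1 ne2 ne3 f1 f2 by (simp add: T_def P_def)
qed


lemma nd_mono: "N \<le> N' \<Longrightarrow> nd N' t \<Longrightarrow> nd N t"
  unfolding nd_def
proof (intro allI notI)
  fix q :: int assume le: "N \<le> N'" and h: "\<forall>q::int. 2^N' * t \<noteq> of_int q" and e: "2^N * t = of_int q"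
  have "2^N' * t = 2^(N' - N) * (2^N * t)" using le by (simp add: power_add[symmetric])
  also have "\<dots> = of_int (2^(N' - N) * q)" using e by simp
  finally show False using h by blast
qed

lemma nd_floor:
  assumes "0 \<le> t" "t \<le> 1" "nd N t"
  shows "0 \<le> \<lfloor>2^N * t\<rfloor>" "\<lfloor>2^N * t\<rfloor> < 2^N"
proof -
  show "0 \<le> \<lfloor>2^N * t\<rfloor>" using assms by simp
  have "2^N * t \<le> 2^N" using assms by simp
  moreover have "2^N * t \<noteq> 2^N" using assms(3)[unfolded nd_def, rule_format, of "2^N"] by simp
  ultimately have "2^N * t < 2^N" by simp
  then show "\<lfloor>2^N * t\<rfloor> < 2^N" by (simp add: floor_less_iff)
qed

definition Kh :: "nat \<Rightarrow> real \<Rightarrow> real \<Rightarrow> real" where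
  "Kh N t u = (\<Sum>n\<in>{1..2^N}. haar n t * haar n u)"

lemma floor_half: "\<lfloor>2^N * t\<rfloor> = \<lfloor>2^Suc N * t\<rfloor> div 2" for t :: real
proof -
  have "2^N * t = (2^Suc N * t) / real_of_int 2" by simp
  then show ?thesis using floor_divide_real_eq_div[of 2 "2^Suc N * t"] by simp
qed

lemma sum_ind_pair:
  assumes "0 \<le> a" "a < 2^N"
  shows "(\<Sum>i\<in>{1..(2::nat)^N}. ind (a = int i - 1) * ind (b = int i - 1)) = ind (a = b)"
proof -
  have "(\<Sum>i\<in>{1..(2::nat)^N}. ind (a = int i - 1) * ind (b = int i - 1)) =
        (\<Sum>i\<in>{1..(2::nat)^N}. if nat a + 1 = i then ind (a = b) else 0)"
    using assms(1) by (intro sum.cong refl) (auto simp: ind_def)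
  also have "\<dots> = ind (a = b)"
  proof -
    have "a < int (2^N)" using assms by simp
    then have "nat a < 2^N" using nat_less_iff assms(1) by blast
    then have "Suc (nat a) \<le> 2^N" by (rule Suc_leI)
    then have "nat a + 1 \<in> {1..(2::nat)^N}" by simp
    then show ?thesis by simp
  qed
  finally show ?thesis .
qed

lemma kernel_1d_haar:
  assumes "0 \<le> t" "t \<le> 1" "0 \<le> u" "u \<le> 1" "nd N t" "nd N u"
  shows "Kh N t u = 2^N * ind (\<lfloor>2^N * t\<rfloor> = \<lfloor>2^N * u\<rfloor>)"
  using assms(5,6)
proof (induction N)
  case 0
  have "\<lfloor>t\<rfloor> = 0" "\<lfloor>u\<rfloor> = 0" using nd_floor[OF assms(1,2) 0(1)] nd_floor[OF assms(3,4) 0(2)] by (simp_all add: floor_eq_iff)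
  then show ?case by (simp add: Kh_def haar_Suc0 ind_def)
next
  case (Suc N)
  have ndt: "nd N t" and ndu: "nd N u" using Suc.prems nd_mono[of N "Suc N"] by auto
  define qt where "qt = \<lfloor>2^Suc N * t\<rfloor>"
  define qu where "qu = \<lfloor>2^Suc N * u\<rfloor>"
  define \<epsilon> where "\<epsilon> q = (if even q then 1 else (-1::real))" for q :: int
  have qt: "0 \<le> qt div 2" "qt div 2 < 2^N"
    using nd_floor[OF assms(1,2) ndt] floor_half[of N t] unfolding qt_def by auto
  have split: "{1..(2::nat)^Suc N} = {1..2^N} \<union> (\<lambda>i. 2^N + i) ` {1..2^N}"
  proof (intro set_eqI iffI)
    fix n assume "n \<in> {1..(2::nat)^Suc N}"
    then show "n \<in> {1..2^N} \<union> (\<lambda>i. 2^N + i) ` {1..2^N}"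
      by (cases "n \<le> 2^N") (auto simp: image_iff intro!: bexI[of _ "n - 2^N"])
  qed auto
  have disj: "{1..(2::nat)^N} \<inter> (\<lambda>i. 2^N + i) ` {1..2^N} = {}" by auto
  have hf: "haar (2^N + i) x = 2 powr (real N / 2) * (ind (\<lfloor>2^Suc N * x\<rfloor> div 2 = int i - 1) * \<epsilon> \<lfloor>2^Suc N * x\<rfloor>)"
    if "i \<in> {1..2^N}" "nd (Suc N) x" for i x
  proof -
    have "(if \<lfloor>2^Suc N * x\<rfloor> = 2 * int i - 2 then 1 else if \<lfloor>2^Suc N * x\<rfloor> = 2 * int i - 1 then -1 else 0) =
          ind (\<lfloor>2^Suc N * x\<rfloor> div 2 = int i - 1) * \<epsilon> \<lfloor>2^Suc N * x\<rfloor>"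
      unfolding ind_def \<epsilon>_def by (cases "even \<lfloor>2^Suc N * x\<rfloor>") (auto, presburger+)
    then show ?thesis using haar_formula[of i N x] that by simp
  qed
  have pw: "2 powr (real N / 2) * 2 powr (real N / 2) = (2::real)^N"
    by (simp add: powr_add[symmetric] powr_realpow)
  have r: "(\<Sum>n\<in>(\<lambda>i. 2^N + i) ` {1..2^N}. haar n t * haar n u) = (\<Sum>i\<in>{1..2^N}. haar (2^N+i) t * haar (2^N+i) u)"
    by (subst sum.reindex) (auto simp: inj_on_def)
  have "Kh (Suc N) t u = Kh N t u + (\<Sum>i\<in>{1..2^N}. haar (2^N + i) t * haar (2^N + i) u)"
    unfolding Kh_def split by (simp only: sum.union_disjoint[OF finite_atLeastAtMost finite_imageI[OF finite_atLeastAtMost] disj] r)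
  also have "(\<Sum>i\<in>{1..2^N}. haar (2^N + i) t * haar (2^N + i) u) =
      2^N * (\<epsilon> qt * \<epsilon> qu) * (\<Sum>i\<in>{1..(2::nat)^N}. ind (qt div 2 = int i - 1) * ind (qu div 2 = int i - 1))"
    unfolding sum_distrib_left
    by (intro sum.cong refl) (simp add: hf Suc.prems qt_def qu_def pw[symmetric] mult_ac)
  also have "\<dots> = 2^N * (\<epsilon> qt * \<epsilon> qu) * ind (qt div 2 = qu div 2)"
    using sum_ind_pair[OF qt] by simp
  also have "Kh N t u = 2^N * ind (qt div 2 = qu div 2)"
    using Suc.IH[OF ndt ndu] floor_half[of N t] floor_half[of N u] unfolding qt_def qu_def by simp
  also have "2^N * ind (qt div 2 = qu div 2) + 2^N * (\<epsilon> qt * \<epsilon> qu) * ind (qt div 2 = qu div 2) =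
        2^Suc N * ind (qt = qu)"
    unfolding ind_def \<epsilon>_def by (auto, presburger+)
  finally show ?case unfolding qt_def qu_def .
qed


lemma haar_decomp:
  fixes m :: nat
  assumes "2 \<le> m"
  obtains L i where "1 \<le> i" "i \<le> 2^L" "m = 2^L + i"
proof -
  have "1 \<le> m - 1" using assms by simp
  then obtain L where L: "2^L \<le> m - 1" "m - 1 < 2^(L+1)" using ex_power_ivl1[of 2 "m - 1"] by auto
  show ?thesis by (rule that[of "m - 2^L" L]) (use L assms in auto)
qed

lemma haar_cell_dep:
  assumes m: "m \<in> {1..2^N}" and t: "nd N t" and t': "nd N t'"
    and fl: "\<lfloor>2^N * t\<rfloor> = \<lfloor>2^N * t'\<rfloor>"
  shows "haar m t = haar m t'"
proof (cases "m = 1")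
  case True then show ?thesis by (simp add: haar_one haar_Suc0)
next
  case False
  then have "2 \<le> m" using m by auto
  then obtain L i where i: "1 \<le> i" "i \<le> 2^L" and mL: "m = 2^L + i" by (rule haar_decomp)
  have "2^L + i \<le> (2::nat)^N" using m mL by auto
  then have "(2::nat)^L < 2^N" using i by linarith
  then have "L < N" using power_less_imp_less_exp[of 2 L N] by simp
  then have LN: "Suc L \<le> N" by simp
  have fl2: "\<lfloor>2^Suc L * x\<rfloor> = \<lfloor>2^N * x\<rfloor> div 2^(N - Suc L)" for x :: real
  proof -
    have e: "(2::real)^N = 2^(N - Suc L) * 2^Suc L"
      using LN by (simp only: power_add[symmetric] le_add_diff_inverse2)
    have "2^Suc L * x = (2^N * x) / real_of_int (2^(N - Suc L))"
      unfolding e by simp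
    then show ?thesis using floor_divide_real_eq_div[of "2^(N - Suc L)" "2^N * x"] by simp
  qed
  show ?thesis unfolding mL
    using haar_formula[OF i nd_mono[OF LN t]] haar_formula[OF i nd_mono[OF LN t']] fl2[of t] fl2[of t'] fl
    by simp
qed

definition ctr :: "nat \<Rightarrow> ('d \<Rightarrow> nat) \<Rightarrow> real^'d" where
  "ctr N j = (\<chi> s. (real (j s) + 1/2) / 2^N)"

lemma nd_ctr: "nd N ((real k + 1/2) / 2^N)"
  unfolding nd_def
proof (intro allI notI)
  fix q :: int assume a: "2^N * ((real k + 1/2) / 2^N) = of_int q"
  have "2^N * ((real k + 1/2) / 2^N) = real k + 1/2" by simp
  then have "2 * real k + 1 = 2 * of_int q" using a by simp
  then have "2 * int k + 1 = 2 * q" by linarith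
  then show False by presburger
qed

lemma floor_ctr: "\<lfloor>2^N * ((real k + 1/2) / 2^N)\<rfloor> = int k"
  by (simp add: floor_eq_iff)

lemma ctr_01: "k < 2^N \<Longrightarrow> 0 \<le> (real k + 1/2) / 2^N \<and> (real k + 1/2) / 2^N \<le> 1"
proof -
  assume "k < 2^N"
  then have "real k + 1 \<le> 2^N" by (metis Suc_leI of_nat_Suc of_nat_le_iff of_nat_numeral of_nat_power add.commute)
  then show ?thesis by (simp add: divide_le_eq)
qed

lemma nd_ctr_suc: "nd N ((real k + 1/2) / 2^Suc N)"
  unfolding nd_def
proof (intro allI notI)
  fix q :: int assume a: "2^N * ((real k + 1/2) / 2^Suc N) = of_int q"
  have "2^N * ((real k + 1/2) / 2^Suc N) = (real k + 1/2) / 2" by simp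
  then have "2 * real k + 1 = 4 * of_int q" using a by simp
  then have "2 * int k + 1 = 4 * q" by linarith
  then show False by presburger
qed

lemma floor_ctr_suc: "\<lfloor>2^N * ((real k + 1/2) / 2^Suc N)\<rfloor> = int (k div 2)"
proof -
  have "2^N * ((real k + 1/2) / 2^Suc N) = real_of_int (2 * int k + 1) / real_of_int 4"
    by (simp add: field_simps)
  then have "\<lfloor>2^N * ((real k + 1/2) / 2^Suc N)\<rfloor> = (2 * int k + 1) div 4"
    using floor_divide_of_int_eq by metis
  also have "\<dots> = int (k div 2)" by presburger
  finally show ?thesis .
qed

lemma kernel_d:
  "(\<Sum>n\<in>Pi\<^sub>E UNIV (\<lambda>_. {1..2^N}). haar_d n x * haar_d n z) = (\<Prod>s\<in>UNIV. Kh N (x$s) (z$s))"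
  for x z :: "real^'d::finite"
proof -
  have "(\<Sum>n\<in>Pi\<^sub>E UNIV (\<lambda>_. {1..2^N}). haar_d n x * haar_d n z) =
      (\<Sum>n\<in>Pi\<^sub>E UNIV (\<lambda>_. {1..2^N}). \<Prod>s\<in>UNIV. (\<lambda>s m. haar m (x$s) * haar m (z$s)) s (n s))"
    unfolding haar_d_def by (simp add: prod.distrib)
  also have "\<dots> = (\<Prod>s\<in>UNIV. \<Sum>m\<in>{1..2^N}. haar m (x$s) * haar m (z$s))"
    by (rule prod_sum_PiE[symmetric]) auto
  finally show ?thesis unfolding Kh_def .
qed


definition jx :: "nat \<Rightarrow> real^'d \<Rightarrow> ('d \<Rightarrow> nat)" where
  "jx N x = (\<lambda>s. nat \<lfloor>2^N * x$s\<rfloor>)"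

definition ZZ :: "nat \<Rightarrow> (real^'d) set" where
  "ZZ N = {x. \<exists>s. \<exists>q\<in>{0..(2::nat)^N}. x$s = real q / 2^N}"

lemma negligible_ZZ: "negligible (ZZ N :: (real^'d::finite) set)"
proof -
  have "ZZ N = \<Union> ((\<lambda>(s, q). {x::real^'d. x \<bullet> axis s 1 = real q / 2^N}) ` (UNIV \<times> {0..2^N}))"
    by (auto simp: ZZ_def cart_eq_inner_axis[symmetric])
  also have "negligible \<dots>"
    by (rule negligible_Union) (auto intro!: negligible_standard_hyperplane)
  finally show ?thesis .
qed

lemma good_nd:
  assumes "x \<in> unit_cube" "x \<notin> ZZ N"
  shows "nd N (x$s)"
  unfolding nd_def
proof (intro allI notI)
  fix q :: int assume q: "2^N * x$s = of_int q"
  have x01: "0 \<le> x$s" "x$s \<le> 1" using assms(1) by (auto simp: cube_iff)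
  have "0 \<le> (2::real)^N * x$s" "(2::real)^N * x$s \<le> 2^N" using x01 by (simp_all add: mult_le_cancel_left1)
  then have "real_of_int 0 \<le> real_of_int q" "real_of_int q \<le> real_of_int (2^N)" using q by simp_all
  then have "0 \<le> q" "q \<le> 2^N" by (simp_all only: of_int_le_iff)
  then have "nat q \<in> {0..(2::nat)^N}" by (simp add: nat_le_iff)
  moreover have "x$s = real (nat q) / 2^N" using q \<open>0 \<le> q\<close> by (simp add: field_simps)
  ultimately show False using assms(2) unfolding ZZ_def by blast
qed

lemma jx_JJ:
  assumes "x \<in> unit_cube" "\<And>s. nd N (x$s)"
  shows "jx N x \<in> JJ (2^N)"
proof -
  have "nat \<lfloor>2^N * x$s\<rfloor> < 2^N" for s
  proof -
    have "\<lfloor>2^N * x$s\<rfloor> < int (2^N)" using nd_floor[of "x$s" N] assms by (auto simp: cube_iff)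
    then show ?thesis using nat_less_iff nd_floor[of "x$s" N] assms by (auto simp: cube_iff)
  qed
  then show ?thesis by (auto simp: JJ_def jx_def)
qed

lemma cell_iff:
  assumes "x \<in> unit_cube" "\<And>s. nd N (x$s)"
  shows "x \<in> cbox (lo N j) (hi N j) \<longleftrightarrow> j = jx N x"
proof -
  have "(real (j s) / 2^N \<le> x$s \<and> x$s \<le> (real (j s) + 1) / 2^N) \<longleftrightarrow> j s = nat \<lfloor>2^N * x$s\<rfloor>" for s
  proof -
    have ne: "2^N * x$s \<noteq> real (j s) + 1" using assms(2)[of s, unfolded nd_def, rule_format, of "int (j s) + 1"] by simp
    have x0: "0 \<le> x$s" using assms(1) by (auto simp: cube_iff)
    have "(real (j s) / 2^N \<le> x$s \<and> x$s \<le> (real (j s) + 1) / 2^N) \<longleftrightarrow>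
        (real (j s) \<le> 2^N * x$s \<and> 2^N * x$s \<le> real (j s) + 1)"
      by (simp add: divide_le_eq le_divide_eq mult.commute)
    also have "\<dots> \<longleftrightarrow> (real (j s) \<le> 2^N * x$s \<and> 2^N * x$s < real (j s) + 1)" using ne by auto
    also have "\<dots> \<longleftrightarrow> \<lfloor>2^N * x$s\<rfloor> = int (j s)" by (simp add: floor_eq_iff)
    also have "\<dots> \<longleftrightarrow> j s = nat \<lfloor>2^N * x$s\<rfloor>" using x0 by auto
    finally show ?thesis .
  qed
  then show ?thesis by (auto simp: mem_box_cart lo_def hi_def jx_def fun_eq_iff)
qed

lemma haar_d_ctr:
  assumes n: "n \<in> Pi\<^sub>E UNIV (\<lambda>_. {1..2^N})" and x: "x \<in> unit_cube" "\<And>s. nd N (x$s)"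
  shows "haar_d n x = haar_d n (ctr N (jx N x))"
  unfolding haar_d_def
proof (rule prod.cong[OF refl])
  fix s
  have j: "jx N x \<in> JJ (2^N)" by (rule jx_JJ[OF x])
  have "\<lfloor>2^N * (ctr N (jx N x) $ s)\<rfloor> = int (jx N x s)" by (simp add: ctr_def floor_ctr)
  also have "\<dots> = \<lfloor>2^N * x$s\<rfloor>" using x(1) by (auto simp: jx_def cube_iff)
  finally have fl: "\<lfloor>2^N * (ctr N (jx N x) $ s)\<rfloor> = \<lfloor>2^N * x$s\<rfloor>" .
  show "haar (n s) (x $ s) = haar (n s) (ctr N (jx N x) $ s)"
    by (rule haar_cell_dep) (use n x(2) fl in \<open>auto simp: ctr_def nd_ctr PiE_iff\<close>)
qed

lemma haar_coeff_eq:
  fixes f :: "real^'d::finite \<Rightarrow> real"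
  assumes f: "continuous_on unit_cube f" and n: "n \<in> Pi\<^sub>E UNIV (\<lambda>_. {1..2^N})"
  shows "haar_coeff n f = (\<Sum>j\<in>JJ (2^N). haar_d n (ctr N j) * integral (cbox (lo N j) (hi N j)) f)"
proof -
  define g where "g x = (\<Sum>j\<in>JJ (2^N). haar_d n (ctr N j) * (if x \<in> cbox (lo N j) (hi N j) then f x else 0))" for x
  have "(g has_integral (\<Sum>j\<in>JJ (2^N). haar_d n (ctr N j) * integral (cbox (lo N j) (hi N j)) f)) unit_cube"
    unfolding g_def
  proof (intro has_integral_sum finite_JJ has_integral_mult_right)
    fix j :: "'d \<Rightarrow> nat" assume j: "j \<in> JJ (2^N)"
    have "f integrable_on cbox (lo N j) (hi N j)"
      by (rule integrable_continuous) (rule continuous_on_subset[OF f cell_sub[OF j]])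
    then have "(f has_integral integral (cbox (lo N j) (hi N j)) f) (cbox (lo N j) (hi N j) \<inter> unit_cube)"
      using cell_sub[OF j] by (simp add: Int_absorb2 integrable_integral)
    then show "((\<lambda>x. if x \<in> cbox (lo N j) (hi N j) then f x else 0) has_integral integral (cbox (lo N j) (hi N j)) f) unit_cube"
      by (simp only: has_integral_restrict_Int)
  qed
  moreover have "g x = f x * haar_d n x" if "x \<in> unit_cube - ZZ N" for x
  proof -
    have x: "x \<in> unit_cube" "\<And>s. nd N (x$s)" using that good_nd by auto
    have "g x = (\<Sum>j\<in>JJ (2^N). if jx N x = j then haar_d n (ctr N j) * f x else 0)"
      unfolding g_def by (intro sum.cong refl) (auto simp: cell_iff[OF x])
    also have "\<dots> = haar_d n (ctr N (jx N x)) * f x" using jx_JJ[OF x] by simp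
    finally show ?thesis using haar_d_ctr[OF n x] by simp
  qed
  ultimately have "((\<lambda>x. f x * haar_d n x) has_integral (\<Sum>j\<in>JJ (2^N). haar_d n (ctr N j) * integral (cbox (lo N j) (hi N j)) f)) unit_cube"
    using has_integral_spike[OF negligible_ZZ] by (metis (no_types, lifting))
  then show ?thesis unfolding haar_coeff_def by (rule integral_unique)
qed

lemma haar_partial_eq:
  fixes f :: "real^'d::finite \<Rightarrow> real"
  assumes f: "continuous_on unit_cube f" and x: "x \<in> unit_cube" "\<And>s. nd N (x$s)"
  shows "haar_partial N f x = avgc N f (jx N x)"
proof -
  define I where "I j = integral (cbox (lo N j) (hi N j)) f" for j
  have "haar_partial N f x = (\<Sum>n\<in>Pi\<^sub>E UNIV (\<lambda>_. {1..2^N}). \<Sum>j\<in>JJ (2^N). I j * (haar_d n (ctr N j) * haar_d n x))"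
    unfolding haar_partial_def
    by (intro sum.cong refl) (simp add: haar_coeff_eq[OF f] I_def sum_distrib_right sum_distrib_left mult_ac)
  also have "\<dots> = (\<Sum>j\<in>JJ (2^N). I j * (\<Sum>n\<in>Pi\<^sub>E UNIV (\<lambda>_. {1..2^N}). haar_d n (ctr N j) * haar_d n x))"
    by (subst sum.swap) (simp add: sum_distrib_left)
  also have "\<dots> = (\<Sum>j\<in>JJ (2^N). I j * (2 ^ (N * CARD('d)) * ind (j = jx N x)))"
  proof (intro sum.cong refl arg_cong[where f="\<lambda>z. I _ * z"])
    fix j :: "'d \<Rightarrow> nat" assume j: "j \<in> JJ (2^N)"
    have "(\<Sum>n\<in>Pi\<^sub>E UNIV (\<lambda>_. {1..2^N}). haar_d n (ctr N j) * haar_d n x) = (\<Prod>s\<in>UNIV. Kh N (ctr N j $ s) (x$s))"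
      by (rule kernel_d)
    also have "\<dots> = (\<Prod>s\<in>UNIV. 2^N * ind (int (j s) = \<lfloor>2^N * x$s\<rfloor>))"
    proof (rule prod.cong[OF refl])
      fix s
      have js: "j s < 2^N" using j by (auto simp: JJ_def PiE_iff)
      have "Kh N (ctr N j $ s) (x$s) = 2^N * ind (\<lfloor>2^N * (ctr N j $ s)\<rfloor> = \<lfloor>2^N * x$s\<rfloor>)"
        by (rule kernel_1d_haar) (use x ctr_01[OF js] in \<open>auto simp: ctr_def nd_ctr cube_iff\<close>)
      then show "Kh N (ctr N j $ s) (x$s) = 2^N * ind (int (j s) = \<lfloor>2^N * x$s\<rfloor>)"
        by (simp add: ctr_def floor_ctr)
    qed
    also have "\<dots> = 2 ^ (N * CARD('d)) * ind (j = jx N x)"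
    proof -
      have "(\<forall>s\<in>UNIV. int (j s) = \<lfloor>2^N * x$s\<rfloor>) \<longleftrightarrow> j = jx N x"
      proof
        assume h: "\<forall>s\<in>UNIV. int (j s) = \<lfloor>2^N * x$s\<rfloor>"
        show "j = jx N x" unfolding jx_def fun_eq_iff
        proof
          fix s
          have "\<lfloor>2^N * x$s\<rfloor> = int (j s)" using h by simp
          then show "j s = nat \<lfloor>2^N * x$s\<rfloor>" by simp
        qed
      next
        assume "j = jx N x"
        then show "\<forall>s\<in>UNIV. int (j s) = \<lfloor>2^N * x$s\<rfloor>"
          using x(1) by (auto simp: jx_def cube_iff)
      qed
      then show ?thesis
        by (simp add: prod.distrib prod_ind power_mult mult.commute)
    qed
    finally show "(\<Sum>n\<in>Pi\<^sub>E UNIV (\<lambda>_. {1..2^N}). haar_d n (ctr N j) * haar_d n x) = 2 ^ (N * CARD('d)) * ind (j = jx N x)" .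
  qed
  also have "\<dots> = (\<Sum>j\<in>JJ (2^N). if jx N x = j then 2 ^ (N * CARD('d)) * I j else 0)"
    by (intro sum.cong refl) (auto simp: ind_def)
  also have "\<dots> = avgc N f (jx N x)"
    using jx_JJ[OF x] by (simp add: avgc_def I_def)
  finally show ?thesis .
qed


lemma ctr_cube: "j \<in> JJ (2^N) \<Longrightarrow> ctr N j \<in> unit_cube"
  using ctr_01 by (auto simp: cube_iff ctr_def JJ_def PiE_iff)

lemma jx_ctr: "jx N (ctr N j) = j"
  by (simp add: jx_def ctr_def floor_ctr fun_eq_iff)

lemma dyadic_eq:
  fixes F f :: "real^'d::finite \<Rightarrow> real"
  assumes f: "continuous_on unit_cube f" and y: "y \<in> unit_cube"
  shows "dyadic_int F N (haar_partial N f) y = Phi F f N y"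
  unfolding dyadic_int_def Phi_def JJ_def[symmetric]
proof (rule sum.cong[OF refl])
  fix j :: "'d \<Rightarrow> nat" assume j: "j \<in> JJ (2^N)"
  have c: "(\<chi> s. (real (j s) + 1/2) / 2^N) = ctr N j" by (simp add: ctr_def)
  have "haar_partial N f (ctr N j) = avgc N f j"
    using haar_partial_eq[OF f ctr_cube[OF j], of N] jx_ctr[of N j] by (simp add: ctr_def nd_ctr)
  then show "haar_partial N f (\<chi> s. (real (j s) + 1/2) / 2^N) *
      rect_incr F (\<chi> s. real (j s) / 2^N) (\<chi> s. min ((real (j s) + 1) / 2^N) (y $ s)) =
      avgc N f j * RR F (pt N y j) (pt N y (\<lambda>s. Suc (j s)))"
    unfolding c rect_pt[OF y] by simp
qed

lemma dyadic_eq_suc: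
  fixes F f :: "real^'d::finite \<Rightarrow> real"
  assumes f: "continuous_on unit_cube f" and y: "y \<in> unit_cube"
  shows "dyadic_int F (Suc N) (haar_partial N f) y = Phi F f N y"
proof -
  have "Phi F f N y = (\<Sum>j\<in>JJ (2^(N+1)). avgc N f (\<lambda>s. j s div 2^1) *
             RR F (pt (N+1) y j) (pt (N+1) y (\<lambda>s. Suc (j s))))"
    by (rule Phi_refine[OF y])
  also have "\<dots> = dyadic_int F (Suc N) (haar_partial N f) y"
    unfolding dyadic_int_def JJ_def[symmetric] Suc_eq_plus1[symmetric]
  proof (rule sum.cong[OF refl])
    fix j :: "'d \<Rightarrow> nat" assume j: "j \<in> JJ (2^Suc N)"
    have cc: "(\<chi> s. (real (j s) + 1/2) / 2^Suc N) \<in> unit_cube"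
      using ctr_cube[OF j] by (simp add: ctr_def)
    have "haar_partial N f (\<chi> s. (real (j s) + 1/2) / 2^Suc N) = avgc N f (jx N (\<chi> s. (real (j s) + 1/2) / 2^Suc N))"
      by (rule haar_partial_eq[OF f cc]) (simp only: vec_lambda_beta nd_ctr_suc)
    also have "jx N (\<chi> s. (real (j s) + 1/2) / 2^Suc N) = (\<lambda>s. j s div 2)"
      by (simp only: jx_def vec_lambda_beta floor_ctr_suc nat_int)
    finally have h: "haar_partial N f (\<chi> s. (real (j s) + 1/2) / 2^Suc N) = avgc N f (\<lambda>s. j s div 2)" .
    show "avgc N f (\<lambda>s. j s div 2^1) * RR F (pt (Suc N) y j) (pt (Suc N) y (\<lambda>s. Suc (j s))) =
        haar_partial N f (\<chi> s. (real (j s) + 1/2) / 2^Suc N) *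
        rect_incr F (\<chi> s. real (j s) / 2^Suc N) (\<chi> s. min ((real (j s) + 1) / 2^Suc N) (y $ s))"
      unfolding h rect_pt[OF y] by simp
  qed
  finally show ?thesis ..
qed

lemma dyadic_diff: "dyadic_int F k (\<lambda>x. g1 x - g2 x) y = dyadic_int F k g1 y - dyadic_int F k g2 y"
  unfolding dyadic_int_def by (simp add: left_diff_distrib sum_subtractf)

lemma xi_term_eq:
  assumes f: "continuous_on unit_cube f" and y: "y \<in> unit_cube"
  shows "xi_term F f k y = Phi F f (Suc k) y - Phi F f k y"
  unfolding xi_term_def dyadic_diff dyadic_eq[OF f y] dyadic_eq_suc[OF f y] ..

lemma partial_sums:
  assumes f: "continuous_on unit_cube f" and y: "y \<in> unit_cube"
  shows "(\<Sum>k<N. xi_term F f k y) = Phi F f N y - Phi F f 0 y"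
  by (induction N) (simp_all add: xi_term_eq[OF f y])

theorem deterministic:
  fixes F f :: "real^'d::finite \<Rightarrow> real"
  assumes F: "continuous_on unit_cube F" and fs: "cont_diff_cube CARD('d) f"
  shows "(\<forall>y\<in>unit_cube. summable (\<lambda>k. xi_term F f k y)) \<and> continuous_on unit_cube (xi_tilde F f)"
proof -
  obtain D where D0: "D (\<lambda>_. 0) = f"
    and Dc: "\<And>\<alpha>. sum \<alpha> UNIV \<le> CARD('d) \<Longrightarrow> continuous_on unit_cube (D \<alpha>)"
    and Dd: "\<And>\<alpha> s x. sum \<alpha> UNIV < CARD('d) \<Longrightarrow> x \<in> unit_cube \<Longrightarrow>
          ((\<lambda>t. D \<alpha> (x + t *\<^sub>R axis s 1)) has_real_derivative D (\<alpha>(s := Suc (\<alpha> s))) x)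
            (at 0 within {t. x + t *\<^sub>R axis s 1 \<in> unit_cube})"
    using fs unfolding cont_diff_cube_def by blast
  have "\<forall>U. \<exists>B. \<forall>x\<in>unit_cube. \<bar>D (ms U) x\<bar> \<le> B"
  proof
    fix U :: "'d set"
    have "continuous_on unit_cube (D (ms U))" by (rule Dc) (simp add: sum_ms card_mono)
    then have "compact (D (ms U) ` unit_cube)" by (rule compact_continuous_image) (simp add: unit_cube_def)
    then have "bounded (D (ms U) ` unit_cube)" by (rule compact_imp_bounded)
    then show "\<exists>B. \<forall>x\<in>unit_cube. \<bar>D (ms U) x\<bar> \<le> B" by (auto simp: bounded_real)
  qed
  then obtain B where B: "\<And>U x. x \<in> unit_cube \<Longrightarrow> \<bar>D (ms U) x\<bar> \<le> B U" by metis
  define M where "M = (\<Sum>U\<in>UNIV. \<bar>B U\<bar>)"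
  have BM: "\<bar>D (ms U) x\<bar> \<le> M" if "x \<in> unit_cube" for U x
  proof -
    have "B U \<le> \<bar>B U\<bar>" by simp
    also have "\<bar>B U\<bar> \<le> M" unfolding M_def by (rule member_le_sum) auto
    finally show ?thesis using B[OF that, of U] by linarith
  qed
  interpret S: smooth D M
    by unfold_locales (use Dc Dd BM in auto)
  have f0: "D (ms {}) = f" using D0 by (simp add: ms_def)
  have fc: "continuous_on unit_cube f" using S.contD[of "{}"] f0 by simp
  define C where "C = (2 ^ CARD('d) * M) * 2 ^ CARD('d)"
  have C0: "0 \<le> C" using S.M_nonneg by (simp add: C_def)
  have ucf: "uniformly_continuous_on unit_cube f"
    by (rule compact_uniformly_continuous[OF fc]) (simp add: unit_cube_def)
  have cauchy: "uniformly_Cauchy_on unit_cube (\<lambda>N. Phi F f N)"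
    unfolding uniformly_Cauchy_on_def
  proof (intro allI impI)
    fix e :: real assume e: "0 < e"
    define \<delta> where "\<delta> = e / (4 * (C + 1))"
    have \<delta>0: "0 < \<delta>" using e C0 by (simp add: \<delta>_def)
    have C\<delta>: "C * \<delta> < e / 4"
    proof -
      have "C * \<delta> = e / 4 * (C / (C + 1))" using C0 by (simp add: \<delta>_def field_simps)
      also have "\<dots> < e / 4 * 1" using e C0 by (intro mult_strict_left_mono) auto
      finally show ?thesis by simp
    qed
    obtain F' L where L0: "0 \<le> L" and LV: "LV F' L" and FF': "\<And>x. x \<in> unit_cube \<Longrightarrow> \<bar>F x - F' x\<bar> \<le> \<delta>"
      using density[OF F \<delta>0] by blast
    define \<eta> where "\<eta> = e / (8 * (L + 1))"
    have \<eta>0: "0 < \<eta>" using e L0 by (simp add: \<eta>_def)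
    have \<eta>L: "2 * \<eta> * L < e / 4"
    proof -
      have "2 * \<eta> * L = e / 4 * (L / (L + 1))" using L0 by (simp add: \<eta>_def field_simps)
      also have "\<dots> < e / 4 * 1" using e L0 by (intro mult_strict_left_mono) auto
      finally show ?thesis by simp
    qed
    obtain df where df: "df > 0" "\<And>x x'. x \<in> unit_cube \<Longrightarrow> x' \<in> unit_cube \<Longrightarrow> dist x' x < df \<Longrightarrow> dist (f x') (f x) < \<eta>"
      using ucf \<eta>0 unfolding uniformly_continuous_on_def by metis
    obtain N0 where N0: "real CARD('d) / df < 2^N0" using real_arch_pow[of 2 "real CARD('d) / df"] by auto
    have close: "\<bar>f x - f x'\<bar> \<le> \<eta>" if N: "N0 \<le> N" and x: "x \<in> unit_cube" "x' \<in> unit_cube" "\<forall>s. \<bar>x$s - x'$s\<bar> \<le> 1/2^N" for N x x'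
    proof -
      have "dist x x' \<le> (\<Sum>s\<in>UNIV. \<bar>(x - x')$s\<bar>)" unfolding dist_norm by (rule norm_le_l1_cart)
      also have "\<dots> \<le> (\<Sum>s\<in>(UNIV::'d set). 1/2^N)" using x(3) by (intro sum_mono) simp
      also have "\<dots> = real CARD('d) / 2^N" by simp
      also have "\<dots> \<le> real CARD('d) / 2^N0" using N by (intro divide_left_mono) (auto intro: power_increasing)
      also have "\<dots> < df" using N0 df(1) by (simp add: divide_less_eq mult.commute)
      finally have "dist x x' < df" .
      then have "dist (f x) (f x') < \<eta>" using df(2)[OF x(2) x(1)] by (simp add: dist_commute)
      then show ?thesis by (simp add: dist_real_def)
    qed
    have bnd: "\<bar>Phi (\<lambda>x. F x - F' x) f N y\<bar> \<le> C * \<delta>" if "y \<in> unit_cube" for N y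
      using S.Phi_bound[OF that, of "\<lambda>x. F x - F' x" \<delta> N] FF' f0 by (simp add: C_def mult_ac)
    have step: "\<bar>Phi F f (N+l) y - Phi F f N y\<bar> < e" if N: "N0 \<le> N" and y: "y \<in> unit_cube" for N l y
    proof -
      have "\<bar>Phi F' f (N+l) y - Phi F' f N y\<bar> \<le> 2 * \<eta> * L"
        using S.Phi_LV_step[OF LV L0 y, of N \<eta> l] close[OF N] f0 by simp
      moreover have "Phi F f (N+l) y - Phi F f N y =
          Phi (\<lambda>x. F x - F' x) f (N+l) y - Phi (\<lambda>x. F x - F' x) f N y + (Phi F' f (N+l) y - Phi F' f N y)"
        unfolding Phi_diff[symmetric] by simp
      moreover have "\<bar>Phi (\<lambda>x. F x - F' x) f (N+l) y\<bar> \<le> C * \<delta>" "\<bar>Phi (\<lambda>x. F x - F' x) f N y\<bar> \<le> C * \<delta>"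
        using bnd[OF y] by auto
      ultimately show ?thesis using C\<delta> \<eta>L by linarith
    qed
    show "\<exists>M. \<forall>x\<in>unit_cube. \<forall>m\<ge>M. \<forall>n\<ge>M. dist (Phi F f m x) (Phi F f n x) < e"
    proof (intro exI[of _ N0] ballI allI impI)
      fix y :: "real^'d" and m n :: nat assume y: "y \<in> unit_cube" and m: "N0 \<le> m" and n: "N0 \<le> n"
      show "dist (Phi F f m y) (Phi F f n y) < e"
      proof (cases "n \<le> m")
        case True
        then obtain l where "m = n + l" using le_Suc_ex by blast
        then show ?thesis using step[OF n y, of l] by (simp add: dist_real_def)
      next
        case False
        then obtain l where "n = m + l" using le_Suc_ex[of m n] by auto
        then show ?thesis using step[OF m y, of l] by (simp add: dist_real_def abs_minus_commute)
      qed
    qed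
  qed
  then obtain lim where ul: "uniform_limit unit_cube (\<lambda>N. Phi F f N) lim sequentially"
    using Cauchy_uniformly_convergent unfolding uniformly_convergent_on_def by blast
  have cl: "continuous_on unit_cube lim"
    by (rule uniform_limit_theorem[OF always_eventually[OF allI[OF continuous_on_Phi[OF F]]] ul]) simp
  have sums: "(\<lambda>k. xi_term F f k y) sums (lim y - Phi F f 0 y)" if y: "y \<in> unit_cube" for y
  proof -
    have "(\<lambda>N. Phi F f N y) \<longlonglongrightarrow> lim y" by (rule tendsto_uniform_limitI[OF ul y])
    then have "(\<lambda>N. Phi F f N y - Phi F f 0 y) \<longlonglongrightarrow> lim y - Phi F f 0 y" by (intro tendsto_intros)
    then show ?thesis unfolding sums_def partial_sums[OF fc y] .
  qed
  have xt: "xi_tilde F f y = lim y" if y: "y \<in> unit_cube" for y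
    unfolding xi_tilde_def dyadic_eq[OF fc y] sums_unique[OF sums[OF y], symmetric] by simp
  show ?thesis
  proof
    show "\<forall>y\<in>unit_cube. summable (\<lambda>k. xi_term F f k y)" using sums summable_def by blast
    have "continuous_on unit_cube (xi_tilde F f) = continuous_on unit_cube lim"
      by (rule continuous_on_cong[OF refl xt])
    then show "continuous_on unit_cube (xi_tilde F f)" using cl by simp
  qed
qed


theorem theorem4:
  fixes P :: "'w measure"
    and \<mu> :: "(real ^ 'd) set \<Rightarrow> 'w \<Rightarrow> real"
    and \<mu>c :: "real ^ 'd \<Rightarrow> 'w \<Rightarrow> real"
    and f :: "real ^ 'd \<Rightarrow> real"
  assumes "prob_space P" and "complete_measure P"
    and SM: "stochastic_measure P (restrict_space borel unit_cube) \<mu>"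
    and A2_version: "\<forall>x\<in>unit_cube. AE w in P. \<mu>c x w = \<mu> (cbox 0 x) w"
    and A2_cont: "AE w in P. continuous_on unit_cube (\<lambda>x. \<mu>c x w)"
    and A3: "CARD('d) \<ge> 2 \<longrightarrow>
       (AE w in P. summable (\<lambda>k. real (Suc k) ^ (CARD('d) - 2) *
                                  modulus (\<lambda>x. \<mu>c x w) (2 powr - real (Suc k))))"
    and f_smooth: "cont_diff_cube CARD('d) f"
  shows "AE w in P. (\<forall>y\<in>unit_cube. summable (\<lambda>k. xi_term (\<lambda>x. \<mu>c x w) f k y)) \<and>
                     continuous_on unit_cube (xi_tilde (\<lambda>x. \<mu>c x w) f)"
    using A2_cont
proof (rule eventually_mono)
  fix w assume "continuous_on unit_cube (\<lambda>x. \<mu>c x w)"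
  then show "(\<forall>y\<in>unit_cube. summable (\<lambda>k. xi_term (\<lambda>x. \<mu>c x w) f k y)) \<and>
                     continuous_on unit_cube (xi_tilde (\<lambda>x. \<mu>c x w) f)"
    by (rule deterministic[OF _ f_smooth])
qed

end
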